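(* Let $f\in\mathfrak{F}$. If $G_1,G_2\in\mathcal{B}_f$, then $G_1\times G_2\in\mathcal{B}_f$.
   Context: $\mathfrak{F}$ is the set of nondecreasing functions from some interval $[Q,\infty)\cap\mathbb{N}$ to the nonnegative reals; $g\preceq f$ means there exist $N\ge0$ and positive integers $K,M$ with $g(n)\le Kf(Mn)$ for all $n\ge N$. For a group $G$ with finite generating set $A$, $S=A\cup A^{-1}$, $\pi:S^*\to G$ the evaluation map and $d_A$ the word metric: a Cayley automatic representation is a bijection $\psi:L\to G$ from a regular $L\subseteq S^*$ such that for each $a\in A$ the relation $\{(\psi^{-1}(g),\psi^{-1}(ga)) : g\in G\}$ is FA-recognizable (i.e., the language of convolutions — parallel readings of the two strings with the shorter padded by a new symbol — is regular). Its function is $h(n)=\max\{d_A(\pi(w),\psi(w)): w\in L,|w|\le n\}$, and $G\in\mathcal{B}_f$ means some Cayley automatic representation (for some finite generating set; this is independent of the choice) has $h\preceq f$. *)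

theory Defs
  imports "HOL-Algebra.Algebra" Complex_Main
begin

definition in_frakF :: "(nat \<Rightarrow> real) \<Rightarrow> bool" where
  "in_frakF f \<longleftrightarrow> (\<exists>Q::nat. (\<forall>m n. Q \<le> m \<longrightarrow> m \<le> n \<longrightarrow> f m \<le> f n) \<and> (\<forall>n\<ge>Q. 0 \<le> f n))"

definition preceq :: "(nat \<Rightarrow> real) \<Rightarrow> (nat \<Rightarrow> real) \<Rightarrow> bool" where
  "preceq g f \<longleftrightarrow> (\<exists>N K M::nat. 0 < K \<and> 0 < M \<and> (\<forall>n\<ge>N. g n \<le> real K * f (M * n)))"

definition regular_lang :: "'b set \<Rightarrow> 'b list set \<Rightarrow> bool" where
  "regular_lang \<Sigma> L \<longleftrightarrow> L \<subseteq> lists \<Sigma> \<and>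
     (\<exists>(Q::nat set) q0 (\<delta>::nat \<Rightarrow> 'b \<Rightarrow> nat) F.
        finite Q \<and> q0 \<in> Q \<and> (\<forall>q\<in>Q. \<forall>x\<in>\<Sigma>. \<delta> q x \<in> Q) \<and> F \<subseteq> Q \<and>
        L = {w \<in> lists \<Sigma>. fold (\<lambda>x q. \<delta> q x) w q0 \<in> F})"

definition conv :: "'b list \<Rightarrow> 'b list \<Rightarrow> ('b option \<times> 'b option) list" where
  "conv u v = map (\<lambda>i. (if i < length u then Some (u ! i) else None,
                         if i < length v then Some (v ! i) else None))
                  [0..<max (length u) (length v)]"

definition fa_recognizable :: "'b set \<Rightarrow> ('b list \<times> 'b list) set \<Rightarrow> bool" where
  "fa_recognizable \<Sigma> R \<longleftrightarrow>
     regular_lang (insert None (Some ` \<Sigma>) \<times> insert None (Some ` \<Sigma>)) ((\<lambda>(u, v). conv u v) ` R)"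

definition sym_gens :: "('a, 'm) monoid_scheme \<Rightarrow> 'a set \<Rightarrow> 'a set" where
  "sym_gens G A = A \<union> (\<lambda>a. inv\<^bsub>G\<^esub> a) ` A"

fun eval_word :: "('a, 'm) monoid_scheme \<Rightarrow> 'a list \<Rightarrow> 'a" where
  "eval_word G [] = \<one>\<^bsub>G\<^esub>"
| "eval_word G (x # w) = x \<otimes>\<^bsub>G\<^esub> eval_word G w"

definition fin_gen_set :: "('a, 'm) monoid_scheme \<Rightarrow> 'a set \<Rightarrow> bool" where
  "fin_gen_set G A \<longleftrightarrow> finite A \<and> A \<subseteq> carrier G \<and> generate G A = carrier G"

definition word_length :: "('a, 'm) monoid_scheme \<Rightarrow> 'a set \<Rightarrow> 'a \<Rightarrow> nat" where
  "word_length G A g = (LEAST n. \<exists>w \<in> lists (sym_gens G A). length w = n \<and> eval_word G w = g)"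

definition word_dist :: "('a, 'm) monoid_scheme \<Rightarrow> 'a set \<Rightarrow> 'a \<Rightarrow> 'a \<Rightarrow> nat" where
  "word_dist G A g h = word_length G A (inv\<^bsub>G\<^esub> g \<otimes>\<^bsub>G\<^esub> h)"

definition cayley_aut_rep :: "('a, 'm) monoid_scheme \<Rightarrow> 'a set \<Rightarrow> 'a list set \<Rightarrow> ('a list \<Rightarrow> 'a) \<Rightarrow> bool" where
  "cayley_aut_rep G A L \<psi> \<longleftrightarrow>
     regular_lang (sym_gens G A) L \<and> bij_betw \<psi> L (carrier G) \<and>
     (\<forall>a\<in>A. fa_recognizable (sym_gens G A)
        {(inv_into L \<psi> g, inv_into L \<psi> (g \<otimes>\<^bsub>G\<^esub> a)) | g. g \<in> carrier G})"

text \<open>h(n) = max of d_A(pi(w), psi(w)) over w in L with |w| <= n (0 if there is no such w).\<close>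
definition caut_fun :: "('a, 'm) monoid_scheme \<Rightarrow> 'a set \<Rightarrow> 'a list set \<Rightarrow> ('a list \<Rightarrow> 'a) \<Rightarrow> nat \<Rightarrow> real" where
  "caut_fun G A L \<psi> n =
     Max (insert 0 {real (word_dist G A (eval_word G w) (\<psi> w)) | w. w \<in> L \<and> length w \<le> n})"

definition in_Bf :: "(nat \<Rightarrow> real) \<Rightarrow> ('a, 'm) monoid_scheme \<Rightarrow> bool" where
  "in_Bf f G \<longleftrightarrow> (\<exists>A L \<psi>. fin_gen_set G A \<and> cayley_aut_rep G A L \<psi> \<and> preceq (caut_fun G A L \<psi>) f)"

end

theory Submission
  imports Defs
begin


definition quot :: "'b list \<Rightarrow> 'b list set \<Rightarrow> 'b list set" where
  "quot w L = {v. w @ v \<in> L}"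

lemma regular_quot_finite:
  assumes "regular_lang \<Sigma> L" shows "finite ((\<lambda>w. quot w L) ` lists \<Sigma>)"
proof -
  obtain Q q0 \<delta> F where fin: "finite (Q::nat set)" and q0: "q0 \<in> Q" and dQ: "\<forall>q\<in>Q. \<forall>x\<in>\<Sigma>. \<delta> q x \<in> Q"
    and FQ: "F \<subseteq> Q" and L: "L = {w \<in> lists \<Sigma>. fold (\<lambda>x q. \<delta> q x) w q0 \<in> F}"
    using assms unfolding regular_lang_def by blast
  let ?f = "\<lambda>x q. \<delta> q x"
  have inQ: "fold ?f w q \<in> Q" if "w \<in> lists \<Sigma>" "q \<in> Q" for w q
    using that by (induction w arbitrary: q) (auto simp: dQ)
  have "quot w L = (\<lambda>q. {v \<in> lists \<Sigma>. fold ?f v q \<in> F}) (fold ?f w q0)" if "w \<in> lists \<Sigma>" for w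
    using that unfolding quot_def L by auto
  hence "(\<lambda>w. quot w L) ` lists \<Sigma> \<subseteq> (\<lambda>q. {v \<in> lists \<Sigma>. fold ?f v q \<in> F}) ` Q"
    using inQ q0 by blast
  thus ?thesis using fin finite_subset by blast
qed

lemma regular_langI:
  assumes sub: "L \<subseteq> lists \<Sigma>" and fin: "finite ((\<lambda>w. quot w L) ` lists \<Sigma>)"
  shows "regular_lang \<Sigma> L"
proof -
  let ?Q = "(\<lambda>w. quot w L) ` lists \<Sigma>"
  obtain ee where ee: "bij_betw ee ?Q {0..<card ?Q}" using ex_bij_betw_finite_nat[OF fin] by blast
  define dd where "dd = inv_into ?Q ee"
  define tr where "tr = (\<lambda>n x. ee {v. x # v \<in> dd n})"
  have dde: "dd (ee ZZ) = ZZ" if "ZZ \<in> ?Q" for ZZ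
    using ee that unfolding dd_def bij_betw_def by (simp add: inv_into_f_f)
  have eQ: "ee ZZ \<in> {0..<card ?Q}" if "ZZ \<in> ?Q" for ZZ by (rule bij_betw_apply[OF ee that])
  have step: "tr (ee (quot w L)) x = ee (quot (w @ [x]) L)" if "w \<in> lists \<Sigma>" for w x
  proof -
    have "dd (ee (quot w L)) = quot w L" by (rule dde) (use that in blast)
    thus ?thesis unfolding tr_def quot_def by simp
  qed
  have run: "fold (\<lambda>x q. tr q x) v (ee (quot w L)) = ee (quot (w @ v) L)"
    if "w \<in> lists \<Sigma>" "v \<in> lists \<Sigma>" for w v
    using that
  proof (induction v arbitrary: w)
    case Nil then show ?case by simp
  next
    case (Cons x v)
    have "fold (\<lambda>x q. tr q x) (x # v) (ee (quot w L)) = fold (\<lambda>x q. tr q x) v (ee (quot (w @ [x]) L))"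
      using step Cons.prems by simp
    also have "\<dots> = ee (quot ((w @ [x]) @ v) L)" using Cons.IH[of "w @ [x]"] Cons.prems by simp
    finally show ?case by simp
  qed
  show ?thesis unfolding regular_lang_def
  proof (intro conjI exI)
    show "L \<subseteq> lists \<Sigma>" by fact
    show "finite {0..<card ?Q}" by simp
    show "ee (quot [] L) \<in> {0..<card ?Q}" using eQ by blast
    show "\<forall>q\<in>{0..<card ?Q}. \<forall>x\<in>\<Sigma>. tr q x \<in> {0..<card ?Q}"
    proof (intro ballI)
      fix q x assume q: "q \<in> {0..<card ?Q}" and x: "x \<in> \<Sigma>"
      have "q \<in> ee ` ?Q" using ee q unfolding bij_betw_def by simp
      then obtain w where w: "w \<in> lists \<Sigma>" and qe: "q = ee (quot w L)" by blast
      show "tr q x \<in> {0..<card ?Q}" using step[OF w] qe eQ w x by auto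
    qed
    show "{n \<in> {0..<card ?Q}. [] \<in> dd n} \<subseteq> {0..<card ?Q}" by auto
    show "L = {w \<in> lists \<Sigma>. fold (\<lambda>x q. tr q x) w (ee (quot [] L)) \<in> {n \<in> {0..<card ?Q}. [] \<in> dd n}}"
    proof (rule equalityI; rule subsetI)
      fix w assume "w \<in> L"
      then have w: "w \<in> lists \<Sigma>" using sub by blast
      have r: "fold (\<lambda>x q. tr q x) w (ee (quot [] L)) = ee (quot w L)" using run[of "[]" w] w by simp
      have "[] \<in> dd (ee (quot w L))" using dde w \<open>w \<in> L\<close> unfolding quot_def by auto
      then show "w \<in> {w \<in> lists \<Sigma>. fold (\<lambda>x q. tr q x) w (ee (quot [] L)) \<in> {n \<in> {0..<card ?Q}. [] \<in> dd n}}"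
        using w r eQ by auto
    next
      fix w assume "w \<in> {w \<in> lists \<Sigma>. fold (\<lambda>x q. tr q x) w (ee (quot [] L)) \<in> {n \<in> {0..<card ?Q}. [] \<in> dd n}}"
      then have w: "w \<in> lists \<Sigma>" and "[] \<in> dd (fold (\<lambda>x q. tr q x) w (ee (quot [] L)))" by auto
      then have "[] \<in> dd (ee (quot w L))" using run[of "[]" w] by simp
      then show "w \<in> L" using dde w unfolding quot_def by auto
    qed
  qed
qed

lemma regular_sub: "regular_lang \<Sigma> L \<Longrightarrow> L \<subseteq> lists \<Sigma>"
  unfolding regular_lang_def by blast

lemma regular_iff: "regular_lang \<Sigma> L \<longleftrightarrow> L \<subseteq> lists \<Sigma> \<and> finite ((\<lambda>w. quot w L) ` lists \<Sigma>)"
  using regular_langI regular_quot_finite regular_sub by blast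

lemma quot_img: "w \<in> lists \<Sigma> \<Longrightarrow> quot w L \<in> (\<lambda>w. quot w L) ` lists \<Sigma>"
  by blast

lemma regular_Int:
  assumes "regular_lang \<Sigma> L" "regular_lang \<Sigma> M" shows "regular_lang \<Sigma> (L \<inter> M)"
proof -
  have "(\<lambda>w. quot w (L \<inter> M)) ` lists \<Sigma> \<subseteq> (\<lambda>(a,b). a \<inter> b) ` ((\<lambda>w. quot w L) ` lists \<Sigma> \<times> (\<lambda>w. quot w M) ` lists \<Sigma>)"
  proof
    fix Z assume "Z \<in> (\<lambda>w. quot w (L \<inter> M)) ` lists \<Sigma>"
    then obtain w where w: "w \<in> lists \<Sigma>" and Z: "Z = quot w (L \<inter> M)" by blast
    have "Z = (\<lambda>(a,b). a \<inter> b) (quot w L, quot w M)" unfolding Z quot_def by auto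
    then show "Z \<in> (\<lambda>(a,b). a \<inter> b) ` ((\<lambda>w. quot w L) ` lists \<Sigma> \<times> (\<lambda>w. quot w M) ` lists \<Sigma>)"
      using w by blast
  qed
  moreover have "finite ((\<lambda>(a,b). a \<inter> b) ` ((\<lambda>w. quot w L) ` lists \<Sigma> \<times> (\<lambda>w. quot w M) ` lists \<Sigma>))"
    apply (rule finite_imageI) apply (rule finite_cartesian_product)
    using assms[THEN regular_quot_finite] by auto
  ultimately have "finite ((\<lambda>w. quot w (L \<inter> M)) ` lists \<Sigma>)" by (rule finite_subset)
  moreover have "L \<inter> M \<subseteq> lists \<Sigma>" using assms(1)[THEN regular_sub] by blast
  ultimately show ?thesis using regular_langI by blast
qed

lemma regular_lists:
  assumes "\<Gamma> \<subseteq> \<Sigma>" shows "regular_lang \<Sigma> (lists \<Gamma>)"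
proof (rule regular_langI)
  show "lists \<Gamma> \<subseteq> lists \<Sigma>" using assms by auto
  have "(\<lambda>w. quot w (lists \<Gamma>)) ` lists \<Sigma> \<subseteq> {lists \<Gamma>, {}}"
    unfolding quot_def by auto
  then show "finite ((\<lambda>w. quot w (lists \<Gamma>)) ` lists \<Sigma>)" by (rule finite_subset) simp
qed

lemma regular_preimage:
  assumes reg: "regular_lang \<Sigma> L" and h: "h ` \<Gamma> \<subseteq> \<Sigma>"
  shows "regular_lang \<Gamma> {c \<in> lists \<Gamma>. map h c \<in> L}"
proof (rule regular_langI)
  show "{c \<in> lists \<Gamma>. map h c \<in> L} \<subseteq> lists \<Gamma>" by blast
  have "(\<lambda>w. quot w {c \<in> lists \<Gamma>. map h c \<in> L}) ` lists \<Gamma> \<subseteq>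
        (\<lambda>Q. {v \<in> lists \<Gamma>. map h v \<in> Q}) ` ((\<lambda>w. quot w L) ` lists \<Sigma>)"
  proof
    fix Z assume "Z \<in> (\<lambda>w. quot w {c \<in> lists \<Gamma>. map h c \<in> L}) ` lists \<Gamma>"
    then obtain x where x: "x \<in> lists \<Gamma>" and Z: "Z = quot x {c \<in> lists \<Gamma>. map h c \<in> L}" by blast
    have "map h x \<in> lists \<Sigma>" using x h by force
    moreover have "Z = {v \<in> lists \<Gamma>. map h v \<in> quot (map h x) L}"
      using x unfolding Z quot_def by auto
    ultimately show "Z \<in> (\<lambda>Q. {v \<in> lists \<Gamma>. map h v \<in> Q}) ` ((\<lambda>w. quot w L) ` lists \<Sigma>)" by blast
  qed
  then show "finite ((\<lambda>w. quot w {c \<in> lists \<Gamma>. map h c \<in> L}) ` lists \<Gamma>)"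
    using regular_quot_finite[OF reg] by (rule finite_subset[OF _ finite_imageI])
qed

lemma regular_restrict:
  assumes reg: "regular_lang \<Sigma> L" and sub: "L \<subseteq> lists \<Sigma>'"
  shows "regular_lang \<Sigma>' L"
proof (rule regular_langI[OF sub])
  have "(\<lambda>w. quot w L) ` lists \<Sigma>' \<subseteq> insert {} ((\<lambda>w. quot w L) ` lists \<Sigma>)"
  proof
    fix Z assume "Z \<in> (\<lambda>w. quot w L) ` lists \<Sigma>'"
    then obtain w where Z: "Z = quot w L" by blast
    show "Z \<in> insert {} ((\<lambda>w. quot w L) ` lists \<Sigma>)"
    proof (cases "w \<in> lists \<Sigma>")
      case True then show ?thesis using Z by blast
    next
      case False
      then have "Z = {}" using regular_sub[OF reg] unfolding Z quot_def by auto
      then show ?thesis by blast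
    qed
  qed
  then show "finite ((\<lambda>w. quot w L) ` lists \<Sigma>')"
    using regular_quot_finite[OF reg] by (rule finite_subset[OF _ finite_insert[THEN iffD2]])
qed



definition pad_lang :: "'b list set \<Rightarrow> 'b option list set" where
  "pad_lang A = {map Some a @ replicate m None | a m. a \<in> A}"

lemma map_Some_eq: "map Some a = map Some b \<longleftrightarrow> a = b"
  by (simp add: inj_map_eq_map)

lemma K1: "map Some a0 @ v = map Some a @ replicate m None \<longleftrightarrow>
    (\<exists>a1. a = a0 @ a1 \<and> v = map Some a1 @ replicate m None)"
proof
  assume eq: "map Some a0 @ v = map Some a @ replicate m None"
  then obtain us where H: "map Some a0 = map Some a @ us \<and> us @ v = replicate m None \<or>
      map Some a0 @ us = map Some a \<and> v = us @ replicate m None"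
    using append_eq_append_conv2 by blast
  then show "\<exists>a1. a = a0 @ a1 \<and> v = map Some a1 @ replicate m None"
  proof
    assume h: "map Some a0 = map Some a @ us \<and> us @ v = replicate m None"
    have "None \<notin> set us" using h by (metis Un_iff option.distinct(1) ex_map_conv set_append)
    moreover have "set us \<subseteq> {None}" using h
      by (metis Un_upper1 set_append set_replicate_conv_if empty_subsetI subset_trans order.refl)
    ultimately have "us = []" by (cases us) auto
    then show ?thesis using h map_Some_eq by auto
  next
    assume h: "map Some a0 @ us = map Some a \<and> v = us @ replicate m None"
    then obtain p q where "a = p @ q" "map Some a0 = map Some p" "us = map Some q"
      using map_eq_append_conv[of Some a "map Some a0" us] by metis
    then show ?thesis using h map_Some_eq by auto
  qed
qed auto

lemma K2:
  assumes "None \<in> set x" and "x @ v = map Some a @ replicate m None"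
  shows "x \<in> pad_lang {a} \<and> (\<exists>k. v = replicate k None)"
proof -
  obtain us where H: "x = map Some a @ us \<and> us @ v = replicate m None \<or>
      x @ us = map Some a \<and> v = us @ replicate m None"
    using assms(2) append_eq_append_conv2 by blast
  then show ?thesis
  proof
    assume h: "x = map Some a @ us \<and> us @ v = replicate m None"
    have "us = replicate (length us) None"
      using h by (intro replicate_eqI) (auto, metis Un_iff in_set_replicate set_append)
    moreover have "v = replicate (length v) None"
      using h by (intro replicate_eqI) (auto, metis Un_iff in_set_replicate set_append)
    ultimately show ?thesis using h unfolding pad_lang_def by blast
  next
    assume h: "x @ us = map Some a \<and> v = us @ replicate m None"
    then have "None \<in> set (map Some a)" using assms(1) by (metis Un_iff set_append)
    then show ?thesis by auto
  qed
qed

lemma regular_pad: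
  assumes reg: "regular_lang \<Sigma> A"
  shows "regular_lang (insert None (Some ` \<Sigma>)) (pad_lang A)"
proof (rule regular_langI)
  show "pad_lang A \<subseteq> lists (insert None (Some ` \<Sigma>))"
    using regular_sub[OF reg] unfolding pad_lang_def by force
  let ?R = "pad_lang ` ((\<lambda>w. quot w A) ` lists \<Sigma>) \<union> {range (\<lambda>k. replicate k None), {}}"
  have "(\<lambda>w. quot w (pad_lang A)) ` lists (insert None (Some ` \<Sigma>)) \<subseteq> ?R"
  proof
    fix Z assume "Z \<in> (\<lambda>w. quot w (pad_lang A)) ` lists (insert None (Some ` \<Sigma>))"
    then obtain x where x: "x \<in> lists (insert None (Some ` \<Sigma>))" and Z: "Z = quot x (pad_lang A)" by blast
    show "Z \<in> ?R"
    proof (cases "None \<in> set x")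
      case False
      define a0 where "a0 = map the x"
      have xa: "x = map Some a0" unfolding a0_def using False
        by (induction x) (auto)
      have a0: "a0 \<in> lists \<Sigma>" using x False unfolding a0_def by (induction x) auto
      have "Z = pad_lang (quot a0 A)"
        unfolding Z quot_def pad_lang_def xa
      proof (intro Set.set_eqI iffI)
        fix v assume "v \<in> {v. map Some a0 @ v \<in> {map Some a @ replicate m None |a m. a \<in> A}}"
        then obtain a m where am: "a \<in> A" "map Some a0 @ v = map Some a @ replicate m None" by blast
        from K1[THEN iffD1, OF am(2)] obtain a1 where "a = a0 @ a1" "v = map Some a1 @ replicate m None"
          by blast
        then show "v \<in> {map Some a @ replicate m None |a m. a \<in> {v. a0 @ v \<in> A}}"
          using am(1) by blast
      next
        fix v assume "v \<in> {map Some a @ replicate m None |a m. a \<in> {v. a0 @ v \<in> A}}"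
        then obtain a1 m where "a0 @ a1 \<in> A" "v = map Some a1 @ replicate m None" by blast
        then show "v \<in> {v. map Some a0 @ v \<in> {map Some a @ replicate m None |a m. a \<in> A}}"
          by (intro CollectI exI[of _ "a0 @ a1"] exI[of _ m]) auto
      qed
      then show ?thesis using a0 by blast
    next
      case True
      show ?thesis
      proof (cases "x \<in> pad_lang A")
        case True
        then obtain a m where am: "a \<in> A" "x = map Some a @ replicate m None"
          unfolding pad_lang_def by blast
        have "Z = range (\<lambda>k. replicate k (None :: 'a option))"
        proof (intro Set.set_eqI iffI)
          fix v assume "v \<in> Z"
          then obtain a' m' where "x @ v = map Some a' @ replicate m' None"
            unfolding Z quot_def pad_lang_def by blast
          then show "v \<in> range (\<lambda>k. replicate k None)" using K2 \<open>None \<in> set x\<close> by blast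
        next
          fix v assume "v \<in> range (\<lambda>k. replicate k (None :: 'a option))"
          then obtain k where "v = replicate k None" by blast
          then have "x @ v = map Some a @ replicate (m + k) None" using am by (simp add: replicate_add)
          then show "v \<in> Z" unfolding Z quot_def pad_lang_def using am by blast
        qed
        then show ?thesis by blast
      next
        case False
        have "Z = {}"
        proof (rule ccontr)
          assume "Z \<noteq> {}"
          then obtain v where "x @ v \<in> pad_lang A" unfolding Z quot_def by blast
          then obtain a m where am: "a \<in> A" "x @ v = map Some a @ replicate m None"
            unfolding pad_lang_def by blast
          then have "x \<in> pad_lang {a}" using K2 \<open>None \<in> set x\<close> by blast
          then show False using False am unfolding pad_lang_def by blast
        qed
        then show ?thesis by blast
      qed
    qed
  qed
  moreover have "finite ?R" using regular_quot_finite[OF reg] by blast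
  ultimately show "finite ((\<lambda>w. quot w (pad_lang A)) ` lists (insert None (Some ` \<Sigma>)))"
    by (rule finite_subset)
qed



fun cv :: "'x list \<Rightarrow> 'y list \<Rightarrow> ('x option \<times> 'y option) list" where
  "cv [] [] = []"
| "cv (x#xs) [] = (Some x, None) # cv xs []"
| "cv [] (y#ys) = (None, Some y) # cv [] ys"
| "cv (x#xs) (y#ys) = (Some x, Some y) # cv xs ys"

lemma length_cv[simp]: "length (cv a b) = max (length a) (length b)"
  by (induction a b rule: cv.induct) auto

lemma nth_cv: "i < max (length a) (length b) \<Longrightarrow>
  cv a b ! i = (if i < length a then Some (a!i) else None, if i < length b then Some (b!i) else None)"
  by (induction a b arbitrary: i rule: cv.induct) (auto simp: nth_Cons' less_Suc_eq_0_disj)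

lemma conv_cv: "conv a b = cv a b"
  by (rule nth_equalityI) (auto simp: conv_def nth_cv)

lemma fst_cv: "map fst (cv a b) = map Some a @ replicate (max (length a) (length b) - length a) None"
  by (induction a b rule: cv.induct) auto

lemma snd_cv: "map snd (cv a b) = map Some b @ replicate (max (length a) (length b) - length b) None"
  by (induction a b rule: cv.induct) auto

lemma cv_noNN: "(None, None) \<notin> set (cv a b)"
  by (induction a b rule: cv.induct) auto

lemma cv_lists: "a \<in> lists A \<Longrightarrow> b \<in> lists B \<Longrightarrow> cv a b \<in> lists (insert None (Some ` A) \<times> insert None (Some ` B))"
  by (induction a b rule: cv.induct) auto

lemma cv_unique:
  "map fst c = map Some a @ replicate m None \<Longrightarrow> map snd c = map Some b @ replicate m' None \<Longrightarrow>
   (None, None) \<notin> set c \<Longrightarrow> c = cv a b"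
proof (induction a b arbitrary: c m m' rule: cv.induct)
  case 1
  then show ?case by (cases c) (auto simp: Cons_replicate_eq)
next
  case (2 x xs)
  then show ?case by (cases c) (auto simp: Cons_replicate_eq)
next
  case (3 y ys)
  then show ?case by (cases c) (auto simp: Cons_replicate_eq)
next
  case (4 x xs y ys)
  then show ?case by (cases c) (auto simp: Cons_replicate_eq)
qed

lemma regular_cv:
  assumes rA: "regular_lang \<Sigma>A A" and rB: "regular_lang \<Sigma>B B"
  shows "regular_lang (insert None (Some ` \<Sigma>A) \<times> insert None (Some ` \<Sigma>B)) {cv a b | a b. a \<in> A \<and> b \<in> B}"
proof -
  define G where "G = insert None (Some ` \<Sigma>A) \<times> insert None (Some ` \<Sigma>B)"
  define R1 where "R1 = {c \<in> lists G. map fst c \<in> pad_lang A}"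
  define R2 where "R2 = {c \<in> lists G. map snd c \<in> pad_lang B}"
  define R3 where "R3 = lists (G - {(None, None)})"
  have sub1: "{cv a b | a b. a \<in> A \<and> b \<in> B} \<subseteq> (R1 \<inter> R2) \<inter> R3"
  proof
    fix c assume "c \<in> {cv a b | a b. a \<in> A \<and> b \<in> B}"
    then obtain a b where ab: "a \<in> A" "b \<in> B" "c = cv a b" by blast
    have la: "a \<in> lists \<Sigma>A" using regular_sub[OF rA] ab(1) by (rule subsetD)
    have lb: "b \<in> lists \<Sigma>B" using regular_sub[OF rB] ab(2) by (rule subsetD)
    have lG: "c \<in> lists G" unfolding ab(3) G_def by (rule cv_lists[OF la lb])
    have fA: "map fst c \<in> pad_lang A" unfolding ab(3) fst_cv pad_lang_def using ab(1) by blast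
    have fB: "map snd c \<in> pad_lang B" unfolding ab(3) snd_cv pad_lang_def using ab(2) by blast
    have nn: "(None, None) \<notin> set c" unfolding ab(3) by (rule cv_noNN)
    have lN: "c \<in> R3" using lG nn unfolding in_lists_conv_set R3_def by blast
    show "c \<in> (R1 \<inter> R2) \<inter> R3" unfolding R1_def R2_def using lG fA fB lN by blast
  qed
  have sub2: "(R1 \<inter> R2) \<inter> R3 \<subseteq> {cv a b | a b. a \<in> A \<and> b \<in> B}"
  proof
    fix c assume c: "c \<in> (R1 \<inter> R2) \<inter> R3"
    then obtain a m where a: "a \<in> A" "map fst c = map Some a @ replicate m None"
      unfolding pad_lang_def R1_def by blast
    obtain b m' where b: "b \<in> B" "map snd c = map Some b @ replicate m' None"
      using c unfolding pad_lang_def R2_def by blast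
    have "c \<in> R3" using c by blast
    then have "(None, None) \<notin> set c" unfolding in_lists_conv_set R3_def by blast
    then have "c = cv a b" using cv_unique a(2) b(2) by blast
    then show "c \<in> {cv a b | a b. a \<in> A \<and> b \<in> B}" using a b by blast
  qed
  have "regular_lang G ((R1 \<inter> R2) \<inter> R3)"
    unfolding R1_def R2_def R3_def
  proof (intro regular_Int regular_lists)
    show "regular_lang G {c \<in> lists G. map fst c \<in> pad_lang A}"
      unfolding G_def by (rule regular_preimage[OF regular_pad[OF rA]]) auto
    show "regular_lang G {c \<in> lists G. map snd c \<in> pad_lang B}"
      unfolding G_def by (rule regular_preimage[OF regular_pad[OF rB]]) auto
  qed (rule Diff_subset)
  moreover have "{cv a b | a b. a \<in> A \<and> b \<in> B} = (R1 \<inter> R2) \<inter> R3" using sub1 sub2 by (rule equalityI)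
  ultimately show ?thesis unfolding G_def by simp
qed



lemma length_concat_blk:
  assumes "\<And>\<sigma>. \<sigma> \<in> set t \<Longrightarrow> length (blk \<sigma>) = k"
  shows "length (concat (map blk t)) = k * length t"
  using assms by (induction t) auto

lemma take_drop_concat_blk:
  assumes "\<And>\<sigma>. \<sigma> \<in> set t \<Longrightarrow> length (blk \<sigma>) = k"
  shows "take (k * m) (concat (map blk t)) = concat (map blk (take m t)) \<and>
         drop (k * m) (concat (map blk t)) = concat (map blk (drop m t))"
proof -
  have split: "concat (map blk t) = concat (map blk (take m t)) @ concat (map blk (drop m t))"
    by (metis append_take_drop_id concat_append map_append)
  have l1: "length (concat (map blk (take m t))) = k * min m (length t)"
    using assms by (subst length_concat_blk[where k=k]) (auto dest: in_set_takeD)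
  show ?thesis
  proof (cases "m \<le> length t")
    case True
    then have "length (concat (map blk (take m t))) = k * m" using l1 by simp
    then show ?thesis by (subst (1 2) split) simp
  next
    case False
    then have "length (concat (map blk t)) \<le> k * m"
      using assms by (subst length_concat_blk[where k=k]) auto
    then show ?thesis using False by simp
  qed
qed

lemma regular_block_image:
  assumes reg: "regular_lang \<Sigma> T" and finG: "finite \<Gamma>" and k: "0 < k"
    and blk: "\<And>\<sigma>. \<sigma> \<in> \<Sigma> \<Longrightarrow> set (blk \<sigma>) \<subseteq> \<Gamma> \<and> length (blk \<sigma>) = k"
  shows "regular_lang \<Gamma> ((\<lambda>t. concat (map blk t)) ` T)"
proof (rule regular_langI)
  define B where "B = (\<lambda>t. concat (map blk t)) ` T"
  have TS: "T \<subseteq> lists \<Sigma>" by (rule regular_sub[OF reg])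
  have lenb: "\<And>\<sigma>. \<sigma> \<in> set t \<Longrightarrow> length (blk \<sigma>) = k" if "t \<in> lists \<Sigma>" for t
    using that blk by auto
  show "(\<lambda>t. concat (map blk t)) ` T \<subseteq> lists \<Gamma>"
  proof
    fix x assume "x \<in> (\<lambda>t. concat (map blk t)) ` T"
    then obtain t where t: "t \<in> T" "x = concat (map blk t)" by blast
    have "t \<in> lists \<Sigma>" using TS t(1) by (rule subsetD)
    then show "x \<in> lists \<Gamma>" unfolding t(2) using blk by (induction t) auto
  qed
  define QT where "QT = (\<lambda>w. quot w T) ` lists \<Sigma>"
  define \<Phi> where "\<Phi> = (\<lambda>(SS, r). {v. \<exists>Q\<in>SS. \<exists>t'\<in>Q. r @ v = concat (map blk t')})"
  have main: "quot x B \<in> \<Phi> ` (Pow QT \<times> {r. set r \<subseteq> \<Gamma> \<and> length r \<le> k})" if x: "x \<in> lists \<Gamma>" for x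
  proof -
    define m where "m = length x div k"
    define r where "r = drop (k * m) x"
    define Pre where "Pre = {t0 \<in> lists \<Sigma>. concat (map blk t0) = take (k * m) x \<and> length t0 = m}"
    have km: "k * m \<le> length x" unfolding m_def by (simp add: times_div_less_eq_dividend)
    have lr: "length r \<le> k" unfolding r_def m_def using k
      by (simp add: minus_mult_div_eq_mod)
    have rG: "set r \<subseteq> \<Gamma>" unfolding r_def using x by (meson in_lists_conv_set in_set_dropD subsetI)
    have PQ: "(\<lambda>t0. quot t0 T) ` Pre \<subseteq> QT" unfolding Pre_def QT_def by blast
    have "quot x B = \<Phi> ((\<lambda>t0. quot t0 T) ` Pre, r)"
    proof (rule equalityI; rule subsetI)
      fix v assume "v \<in> quot x B"
      then obtain t where t: "t \<in> T" "x @ v = concat (map blk t)" unfolding quot_def B_def by blast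
      have tS: "t \<in> lists \<Sigma>" using TS t(1) by (rule subsetD)
      have lt: "length (x @ v) = k * length t" unfolding t(2) by (rule length_concat_blk[OF lenb[OF tS]])
      have td: "take (k * m) (concat (map blk t)) = concat (map blk (take m t)) \<and>
         drop (k * m) (concat (map blk t)) = concat (map blk (drop m t))"
        by (rule take_drop_concat_blk[OF lenb[OF tS]])
      have mt: "m \<le> length t"
      proof -
        have "k * m \<le> k * length t" using km lt by (simp only: length_append)
        then show ?thesis using k by (metis mult_le_cancel1 not_gr0)
      qed
      have t0: "take m t \<in> Pre" unfolding Pre_def
      proof (intro CollectI conjI)
        show "take m t \<in> lists \<Sigma>" using tS by (meson in_lists_conv_set in_set_takeD)
        show "concat (map blk (take m t)) = take (k * m) x" using td t(2) km
          by (metis take_append diff_is_0_eq take0 append_Nil2)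
        show "length (take m t) = m" using mt by simp
      qed
      have rv: "r @ v = concat (map blk (drop m t))" unfolding r_def using td t(2) km
        by (metis drop_append diff_is_0_eq drop0)
      have "drop m t \<in> quot (take m t) T" unfolding quot_def using t(1) by simp
      then show "v \<in> \<Phi> ((\<lambda>t0. quot t0 T) ` Pre, r)" unfolding \<Phi>_def using t0 rv by blast
    next
      fix v assume "v \<in> \<Phi> ((\<lambda>t0. quot t0 T) ` Pre, r)"
      then obtain t0 t' where t0: "t0 \<in> Pre" and t': "t0 @ t' \<in> T" and rv: "r @ v = concat (map blk t')"
        unfolding \<Phi>_def quot_def by blast
      have "x @ v = take (k * m) x @ r @ v" unfolding r_def by simp
      also have "\<dots> = concat (map blk (t0 @ t'))" using t0 rv unfolding Pre_def by simp
      finally show "v \<in> quot x B" unfolding quot_def B_def using t' by blast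
    qed
    then show ?thesis using PQ lr rG by blast
  qed
  have "finite (\<Phi> ` (Pow QT \<times> {r. set r \<subseteq> \<Gamma> \<and> length r \<le> k}))"
    using regular_quot_finite[OF reg] finite_lists_length_le[OF finG] unfolding QT_def by simp
  moreover have "(\<lambda>w. quot w B) ` lists \<Gamma> \<subseteq> \<Phi> ` (Pow QT \<times> {r. set r \<subseteq> \<Gamma> \<and> length r \<le> k})"
    using main by blast
  ultimately show "finite ((\<lambda>w. quot w ((\<lambda>t. concat (map blk t)) ` T)) ` lists \<Gamma>)"
    unfolding B_def by (rule finite_subset[rotated])
qed



context group begin

lemma sym_gens_carrier: "A \<subseteq> carrier G \<Longrightarrow> sym_gens G A \<subseteq> carrier G"
  unfolding sym_gens_def by auto

lemma sym_gens_inv: "A \<subseteq> carrier G \<Longrightarrow> x \<in> sym_gens G A \<Longrightarrow> inv x \<in> sym_gens G A"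
  unfolding sym_gens_def by (auto simp: subsetD)

lemma eval_word_closed: "set w \<subseteq> carrier G \<Longrightarrow> eval_word G w \<in> carrier G"
  by (induction w) auto

lemma eval_word_append:
  "set u \<subseteq> carrier G \<Longrightarrow> set v \<subseteq> carrier G \<Longrightarrow> eval_word G (u @ v) = eval_word G u \<otimes> eval_word G v"
  by (induction u) (auto simp: eval_word_closed m_assoc)

lemma generate_word:
  assumes "A \<subseteq> carrier G" "x \<in> generate G A"
  shows "\<exists>w \<in> lists (sym_gens G A). eval_word G w = x"
  using assms(2)
proof (induction rule: generate.induct)
  case one
  then show ?case by (intro bexI[of _ "[]"]) auto
next
  case (incl h)
  then show ?case using assms(1) by (intro bexI[of _ "[h]"]) (auto simp: sym_gens_def)
next
  case (inv h)
  then show ?case using assms(1) by (intro bexI[of _ "[inv h]"]) (auto simp: sym_gens_def)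
next
  case (eng h1 h2)
  then obtain w1 w2 where w: "w1 \<in> lists (sym_gens G A)" "eval_word G w1 = h1"
    "w2 \<in> lists (sym_gens G A)" "eval_word G w2 = h2" by blast
  have "set w1 \<subseteq> carrier G" "set w2 \<subseteq> carrier G"
    using w sym_gens_carrier[OF assms(1)] by auto
  then show ?case using w by (intro bexI[of _ "w1 @ w2"]) (auto simp: eval_word_append)
qed

lemma word_generate:
  assumes "A \<subseteq> carrier G" "w \<in> lists (sym_gens G A)"
  shows "eval_word G w \<in> generate G A"
  using assms(2)
proof (induction w)
  case Nil then show ?case by (simp add: generate.one)
next
  case (Cons x w)
  then have "x \<in> generate G A" by (auto simp: sym_gens_def intro: generate.incl generate.inv)
  then show ?case using Cons by (auto intro: generate.eng)
qed

lemma word_length_le: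
  "w \<in> lists (sym_gens G A) \<Longrightarrow> eval_word G w = g \<Longrightarrow> word_length G A g \<le> length w"
  unfolding word_length_def by (rule Least_le) blast

lemma word_length_ex:
  assumes "fin_gen_set G A" "g \<in> carrier G"
  shows "\<exists>w\<in>lists (sym_gens G A). length w = word_length G A g \<and> eval_word G w = g"
proof -
  have A: "A \<subseteq> carrier G" and gen: "generate G A = carrier G" using assms(1) unfolding fin_gen_set_def by auto
  obtain w where "w \<in> lists (sym_gens G A)" "eval_word G w = g" using generate_word[OF A] gen assms(2) by blast
  then have "\<exists>n. \<exists>w \<in> lists (sym_gens G A). length w = n \<and> eval_word G w = g" by blast
  then show ?thesis unfolding word_length_def by (rule LeastI_ex)
qed

end

lemma eval_word_map_fst:
  assumes "group G1" "group G2" "set w \<subseteq> carrier G1"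
  shows "eval_word (G1 \<times>\<times> G2) (map (\<lambda>x. (x, \<one>\<^bsub>G2\<^esub>)) w) = (eval_word G1 w, \<one>\<^bsub>G2\<^esub>)"
  using assms(3) by (induction w) (auto simp: group.is_monoid[OF assms(2)])

lemma eval_word_map_snd:
  assumes "group G1" "group G2" "set w \<subseteq> carrier G2"
  shows "eval_word (G1 \<times>\<times> G2) (map (\<lambda>x. (\<one>\<^bsub>G1\<^esub>, x)) w) = (\<one>\<^bsub>G1\<^esub>, eval_word G2 w)"
  using assms(3) by (induction w) (auto simp: group.is_monoid[OF assms(1)])

lemma finite_bounded_words:
  assumes "finite S" "L \<subseteq> lists S"
  shows "finite {f w | w. w \<in> L \<and> length w \<le> n}"
proof -
  have "{f w | w. w \<in> L \<and> length w \<le> n} \<subseteq> f ` {xs. set xs \<subseteq> S \<and> length xs \<le> n}"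
    using assms(2) by (auto simp: in_lists_conv_set)
  then show ?thesis using finite_lists_length_le[OF assms(1)] by (rule finite_subset[OF _ finite_imageI])
qed



locale two_reps =
  fixes G1 :: "('a, 'm) monoid_scheme" and G2 :: "('b, 'n) monoid_scheme"
    and A1 :: "'a set" and L1 :: "'a list set" and \<psi>1 :: "'a list \<Rightarrow> 'a"
    and A2 :: "'b set" and L2 :: "'b list set" and \<psi>2 :: "'b list \<Rightarrow> 'b"
  assumes g1: "group G1" and g2: "group G2"
    and fg1: "fin_gen_set G1 A1" and fg2: "fin_gen_set G2 A2"
    and car1: "cayley_aut_rep G1 A1 L1 \<psi>1" and car2: "cayley_aut_rep G2 A2 L2 \<psi>2"
begin

abbreviation "PP \<equiv> G1 \<times>\<times> G2"
abbreviation "S1 \<equiv> sym_gens G1 A1"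
abbreviation "S2 \<equiv> sym_gens G2 A2"
abbreviation "e1 \<equiv> \<one>\<^bsub>G1\<^esub>"
abbreviation "e2 \<equiv> \<one>\<^bsub>G2\<^esub>"

definition Ap :: "('a \<times> 'b) set" where
  "Ap = (\<lambda>a. (a, e2)) ` A1 \<union> (\<lambda>b. (e1, b)) ` A2 \<union> {(e1, e2)}"

abbreviation "Sp \<equiv> sym_gens PP Ap"

lemma A1c: "A1 \<subseteq> carrier G1" and A1f: "finite A1" and gen1: "generate G1 A1 = carrier G1"
  using fg1 unfolding fin_gen_set_def by auto
lemma A2c: "A2 \<subseteq> carrier G2" and A2f: "finite A2" and gen2: "generate G2 A2 = carrier G2"
  using fg2 unfolding fin_gen_set_def by auto

lemma reg1: "regular_lang S1 L1" and bij1: "bij_betw \<psi>1 L1 (carrier G1)"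
  and rel1: "\<forall>a\<in>A1. fa_recognizable S1 {(inv_into L1 \<psi>1 g, inv_into L1 \<psi>1 (g \<otimes>\<^bsub>G1\<^esub> a)) | g. g \<in> carrier G1}"
  using car1 unfolding cayley_aut_rep_def by auto
lemma reg2: "regular_lang S2 L2" and bij2: "bij_betw \<psi>2 L2 (carrier G2)"
  and rel2: "\<forall>a\<in>A2. fa_recognizable S2 {(inv_into L2 \<psi>2 g, inv_into L2 \<psi>2 (g \<otimes>\<^bsub>G2\<^esub> a)) | g. g \<in> carrier G2}"
  using car2 unfolding cayley_aut_rep_def by auto

lemma S1c: "S1 \<subseteq> carrier G1" using group.sym_gens_carrier[OF g1 A1c] .
lemma S2c: "S2 \<subseteq> carrier G2" using group.sym_gens_carrier[OF g2 A2c] .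

lemma L1S: "L1 \<subseteq> lists S1" using regular_sub[OF reg1] .
lemma L2S: "L2 \<subseteq> lists S2" using regular_sub[OF reg2] .

lemma gP: "group PP" using DirProd_group[OF g1 g2] .

lemma Apc: "Ap \<subseteq> carrier PP"
  unfolding Ap_def using A1c A2c group.is_monoid[OF g1] group.is_monoid[OF g2] by auto

lemma Apf: "finite Ap" unfolding Ap_def using A1f A2f by simp

lemma Spf: "finite Sp" unfolding sym_gens_def using Apf by simp

lemma Spc: "Sp \<subseteq> carrier PP" using group.sym_gens_carrier[OF gP Apc] .

lemma Sp_fst: assumes "x \<in> S1" shows "(x, e2) \<in> Sp"
proof -
  from assms consider "x \<in> A1" | a where "a \<in> A1" "x = inv\<^bsub>G1\<^esub> a" unfolding sym_gens_def by blast
  then show ?thesis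
  proof cases
    case 1 then show ?thesis unfolding sym_gens_def Ap_def by blast
  next
    case 2
    have "inv\<^bsub>PP\<^esub> (a, e2) = (inv\<^bsub>G1\<^esub> a, inv\<^bsub>G2\<^esub> e2)"
      using 2 A1c by (intro inv_DirProd[OF g1 g2]) (auto simp: group.is_monoid[OF g2])
    also have "\<dots> = (x, e2)" using 2 by (simp add: monoid.inv_one[OF group.is_monoid[OF g2]])
    finally have "(x, e2) = inv\<^bsub>PP\<^esub> (a, e2)" by simp
    moreover have "(a, e2) \<in> Ap" unfolding Ap_def using 2 by blast
    ultimately show ?thesis unfolding sym_gens_def by blast
  qed
qed

lemma Sp_snd: assumes "y \<in> S2" shows "(e1, y) \<in> Sp"
proof -
  from assms consider "y \<in> A2" | b where "b \<in> A2" "y = inv\<^bsub>G2\<^esub> b" unfolding sym_gens_def by blast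
  then show ?thesis
  proof cases
    case 1 then show ?thesis unfolding sym_gens_def Ap_def by blast
  next
    case 2
    have "inv\<^bsub>PP\<^esub> (e1, b) = (inv\<^bsub>G1\<^esub> e1, inv\<^bsub>G2\<^esub> b)"
      using 2 A2c by (intro inv_DirProd[OF g1 g2]) (auto simp: group.is_monoid[OF g1])
    also have "\<dots> = (e1, y)" using 2 by (simp add: monoid.inv_one[OF group.is_monoid[OF g1]])
    finally have "(e1, y) = inv\<^bsub>PP\<^esub> (e1, b)" by simp
    moreover have "(e1, b) \<in> Ap" unfolding Ap_def using 2 by blast
    ultimately show ?thesis unfolding sym_gens_def by blast
  qed
qed

lemma Sp_one: "(e1, e2) \<in> Sp" unfolding sym_gens_def Ap_def by blast

definition s1 :: 'a where "s1 = (if \<exists>x\<in>S1. x \<noteq> e1 then (SOME x. x \<in> S1 \<and> x \<noteq> e1) else e1)"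
definition s2 :: 'b where "s2 = (if \<exists>x\<in>S2. x \<noteq> e2 then (SOME x. x \<in> S2 \<and> x \<noteq> e2) else e2)"

lemma s1_prop: "(s1 \<in> S1 \<and> s1 \<noteq> e1) \<or> ((\<forall>x\<in>S1. x = e1) \<and> s1 = e1)"
  unfolding s1_def by (smt (verit, ccfv_SIG) someI_ex)
lemma s2_prop: "(s2 \<in> S2 \<and> s2 \<noteq> e2) \<or> ((\<forall>x\<in>S2. x = e2) \<and> s2 = e2)"
  unfolding s2_def by (smt (verit, ccfv_SIG) someI_ex)

lemma s1_Sp: "(s1, e2) \<in> Sp" "(inv\<^bsub>G1\<^esub> s1, e2) \<in> Sp" "s1 \<in> carrier G1"
proof -
  show "(s1, e2) \<in> Sp" using s1_prop Sp_fst Sp_one by auto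
  show "(inv\<^bsub>G1\<^esub> s1, e2) \<in> Sp" using s1_prop Sp_fst Sp_one group.sym_gens_inv[OF g1 A1c]
    monoid.inv_one[OF group.is_monoid[OF g1]] by auto
  show "s1 \<in> carrier G1" using s1_prop S1c group.is_monoid[OF g1] by auto
qed

lemma s2_Sp: "(e1, s2) \<in> Sp" "(e1, inv\<^bsub>G2\<^esub> s2) \<in> Sp" "s2 \<in> carrier G2"
proof -
  show "(e1, s2) \<in> Sp" using s2_prop Sp_snd Sp_one by auto
  show "(e1, inv\<^bsub>G2\<^esub> s2) \<in> Sp" using s2_prop Sp_snd Sp_one group.sym_gens_inv[OF g2 A2c]
    monoid.inv_one[OF group.is_monoid[OF g2]] by auto
  show "s2 \<in> carrier G2" using s2_prop S2c group.is_monoid[OF g2] by auto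
qed

definition enc1 :: "'a option \<Rightarrow> ('a \<times> 'b) list" where
  "enc1 o1 = (case o1 of Some x \<Rightarrow> [(x, e2), (e1, e2)] | None \<Rightarrow> [(s1, e2), (inv\<^bsub>G1\<^esub> s1, e2)])"
definition enc2 :: "'b option \<Rightarrow> ('a \<times> 'b) list" where
  "enc2 o2 = (case o2 of Some y \<Rightarrow> [(e1, y), (e1, e2)] | None \<Rightarrow> [(e1, s2), (e1, inv\<^bsub>G2\<^esub> s2)])"
definition enc :: "'a option \<times> 'b option \<Rightarrow> ('a \<times> 'b) list" where
  "enc p = enc1 (fst p) @ enc2 (snd p)"

lemma length_enc[simp]: "length (enc p) = 4"
  unfolding enc_def enc1_def enc2_def by (auto split: option.splits)

lemma enc_Sp:
  assumes "o1 \<in> insert None (Some ` S1)" "o2 \<in> insert None (Some ` S2)"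
  shows "set (enc (o1, o2)) \<subseteq> Sp"
  using assms s1_Sp s2_Sp Sp_fst Sp_snd Sp_one unfolding enc_def enc1_def enc2_def
  by (auto split: option.splits)

definition ev1 :: "'a option \<Rightarrow> 'a" where "ev1 o1 = (case o1 of Some x \<Rightarrow> x | None \<Rightarrow> e1)"
definition ev2 :: "'b option \<Rightarrow> 'b" where "ev2 o2 = (case o2 of Some x \<Rightarrow> x | None \<Rightarrow> e2)"

lemma eval_enc:
  assumes "o1 \<in> insert None (Some ` carrier G1)" "o2 \<in> insert None (Some ` carrier G2)"
  shows "eval_word PP (enc (o1, o2)) = (ev1 o1, ev2 o2)"
proof -
  interpret G1: group G1 by (rule g1)
  interpret G2: group G2 by (rule g2)
  show ?thesis
    using assms s1_Sp(3) s2_Sp(3) unfolding enc_def enc1_def enc2_def ev1_def ev2_def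
    by (auto split: option.splits)
qed

definition W :: "'a list \<Rightarrow> 'b list \<Rightarrow> ('a \<times> 'b) list" where
  "W u v = concat (map enc (cv u v))"

lemma length_W: "length (W u v) = 4 * max (length u) (length v)"
  unfolding W_def by (subst length_concat_blk[where k=4]) auto

lemma W_Sp: "u \<in> lists S1 \<Longrightarrow> v \<in> lists S2 \<Longrightarrow> W u v \<in> lists Sp"
  unfolding W_def
proof (induction u v rule: cv.induct)
  case 1 then show ?case by simp
next
  case (2 x xs) then show ?case using enc_Sp[of "Some x" None] by auto
next
  case (3 y ys) then show ?case using enc_Sp[of None "Some y"] by auto
next
  case (4 x xs y ys) then show ?case using enc_Sp[of "Some x" "Some y"] by auto
qed

lemma eval_W:
  assumes "u \<in> lists S1" "v \<in> lists S2"
  shows "eval_word PP (W u v) = (eval_word G1 u, eval_word G2 v)"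
  using assms
proof (induction u v rule: cv.induct)
  case 1 then show ?case by (simp add: W_def)
next
  case (2 x xs)
  have W: "W (x # xs) [] = enc (Some x, None) @ W xs []" by (simp add: W_def)
  have s: "set (enc (Some x, None)) \<subseteq> carrier PP" "set (W xs []) \<subseteq> carrier PP"
    using enc_Sp[of "Some x" None] W_Sp[of xs "[]"] 2 Spc by auto
  have x: "x \<in> carrier G1" using 2 S1c by auto
  have xs: "eval_word G1 xs \<in> carrier G1" using 2 S1c by (intro group.eval_word_closed[OF g1]) auto
  show ?case unfolding W using group.eval_word_append[OF gP s] 2 eval_enc[of "Some x" None] x xs
    by (simp add: ev1_def ev2_def group.is_monoid[OF g2])
next
  case (3 y ys)
  have W: "W [] (y # ys) = enc (None, Some y) @ W [] ys" by (simp add: W_def)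
  have s: "set (enc (None, Some y)) \<subseteq> carrier PP" "set (W [] ys) \<subseteq> carrier PP"
    using enc_Sp[of None "Some y"] W_Sp[of "[]" ys] 3 Spc by auto
  have y: "y \<in> carrier G2" using 3 S2c by auto
  have ys: "eval_word G2 ys \<in> carrier G2" using 3 S2c by (intro group.eval_word_closed[OF g2]) auto
  show ?case unfolding W using group.eval_word_append[OF gP s] 3 eval_enc[of None "Some y"] y ys
    by (simp add: ev1_def ev2_def group.is_monoid[OF g1])
next
  case (4 x xs y ys)
  have W: "W (x # xs) (y # ys) = enc (Some x, Some y) @ W xs ys" by (simp add: W_def)
  have s: "set (enc (Some x, Some y)) \<subseteq> carrier PP" "set (W xs ys) \<subseteq> carrier PP"
    using enc_Sp[of "Some x" "Some y"] W_Sp[of xs ys] 4 Spc by auto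
  have x: "x \<in> carrier G1" using 4 S1c by auto
  have y: "y \<in> carrier G2" using 4 S2c by auto
  show ?case unfolding W using group.eval_word_append[OF gP s] 4 eval_enc[of "Some x" "Some y"] x y
    by (simp add: ev1_def ev2_def)
qed

end


lemma concat_blk_inj:
  assumes "\<And>x. length (f x) = k" "length xs = length ys" "concat (map f xs) = concat (map f ys)"
  shows "map f xs = map f ys"
  using assms(2,3)
proof (induction xs arbitrary: ys)
  case Nil then show ?case by simp
next
  case (Cons x xs)
  then obtain y ys' where ys: "ys = y # ys'" by (cases ys) auto
  have "f x @ concat (map f xs) = f y @ concat (map f ys')" using Cons.prems ys by simp
  then have "f x = f y \<and> concat (map f xs) = concat (map f ys')"
    using assms(1) by (simp add: append_eq_append_conv)
  then show ?case using Cons ys by simp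
qed

lemma padded_eq:
  assumes "map Some u @ replicate m None = map Some u' @ replicate m' None"
  shows "u = u'"
proof -
  from K1[THEN iffD1, OF assms] obtain a1 where a1: "u' = u @ a1" "replicate m None = map Some a1 @ replicate m' None"
    by blast
  have "a1 = []"
  proof (cases a1)
    case (Cons z zs)
    then have "replicate m None = Some z # (map Some zs @ replicate m' None)" using a1(2) by simp
    then have "Some z = None" by (metis Cons_replicate_eq)
    then show ?thesis by simp
  qed simp
  then show ?thesis using a1 by simp
qed

context two_reps begin

lemma enc_eq: "enc p = enc q \<Longrightarrow> enc1 (fst p) = enc1 (fst q) \<and> enc2 (snd p) = enc2 (snd q)"
  unfolding enc_def
  by (subst (asm) append_eq_append_conv) (auto simp: enc1_def split: option.splits)

lemma enc1_inj: assumes "\<exists>x\<in>S1. x \<noteq> e1" "enc1 a = enc1 b" shows "a = b"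
proof -
  have s: "s1 \<noteq> e1" "s1 \<in> carrier G1" using s1_prop assms(1) s1_Sp(3) by auto
  have "inv\<^bsub>G1\<^esub> s1 \<noteq> e1" using s group.inv_eq_1_iff[OF g1] by blast
  then show ?thesis using assms(2) s unfolding enc1_def by (auto split: option.splits)
qed

lemma enc2_inj: assumes "\<exists>x\<in>S2. x \<noteq> e2" "enc2 a = enc2 b" shows "a = b"
proof -
  have s: "s2 \<noteq> e2" "s2 \<in> carrier G2" using s2_prop assms(1) s2_Sp(3) by auto
  have "inv\<^bsub>G2\<^esub> s2 \<noteq> e2" using s group.inv_eq_1_iff[OF g2] by blast
  then show ?thesis using assms(2) s unfolding enc2_def by (auto split: option.splits)
qed

lemma triv_eval1: "\<forall>x\<in>S1. x = e1 \<Longrightarrow> w \<in> lists S1 \<Longrightarrow> eval_word G1 w = e1"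
  by (induction w) (auto simp: group.is_monoid[OF g1])
lemma triv_eval2: "\<forall>x\<in>S2. x = e2 \<Longrightarrow> w \<in> lists S2 \<Longrightarrow> eval_word G2 w = e2"
  by (induction w) (auto simp: group.is_monoid[OF g2])

lemma triv1: assumes "\<forall>x\<in>S1. x = e1" "g \<in> carrier G1" shows "g = e1"
proof -
  obtain w where "w \<in> lists S1" "eval_word G1 w = g"
    using group.generate_word[OF g1 A1c] assms(2) gen1 by blast
  then show ?thesis using triv_eval1 assms(1) by blast
qed
lemma triv2: assumes "\<forall>x\<in>S2. x = e2" "g \<in> carrier G2" shows "g = e2"
proof -
  obtain w where "w \<in> lists S2" "eval_word G2 w = g"
    using group.generate_word[OF g2 A2c] assms(2) gen2 by blast
  then show ?thesis using triv_eval2 assms(1) by blast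
qed

lemma W_inj:
  assumes u: "u \<in> L1" "u' \<in> L1" and v: "v \<in> L2" "v' \<in> L2" and eq: "W u v = W u' v'"
  shows "u = u' \<and> v = v'"
proof -
  have "4 * max (length u) (length v) = 4 * max (length u') (length v')"
    using eq length_W by metis
  then have len: "length (cv u v) = length (cv u' v')" by simp
  have me: "map enc (cv u v) = map enc (cv u' v')"
    using concat_blk_inj[of enc 4, OF _ len] eq unfolding W_def by simp
  have pw: "enc1 (fst (cv u v ! i)) = enc1 (fst (cv u' v' ! i)) \<and> enc2 (snd (cv u v ! i)) = enc2 (snd (cv u' v' ! i))"
    if "i < length (cv u v)" for i
    using enc_eq[of "cv u v ! i" "cv u' v' ! i"] me that len by (metis nth_map)
  have H1: "map enc1 (map fst (cv u v)) = map enc1 (map fst (cv u' v'))"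
    using pw len by (intro nth_equalityI) auto
  have H2: "map enc2 (map snd (cv u v)) = map enc2 (map snd (cv u' v'))"
    using pw len by (intro nth_equalityI) auto
  have uu: "u = u'"
  proof (cases "\<exists>x\<in>S1. x \<noteq> e1")
    case True
    then have "inj enc1" using enc1_inj by (meson injI)
    then have "map fst (cv u v) = map fst (cv u' v')" using H1 inj_map_eq_map by metis
    then show ?thesis unfolding fst_cv by (rule padded_eq)
  next
    case False
    then have t: "\<forall>x\<in>S1. x = e1" by blast
    have "\<psi>1 u = e1" "\<psi>1 u' = e1" using triv1[OF t bij_betw_apply[OF bij1 u(1)]] triv1[OF t bij_betw_apply[OF bij1 u(2)]] by simp_all
    then show ?thesis using inj_onD[OF bij_betw_imp_inj_on[OF bij1] _ u] by simp
  qed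
  have vv: "v = v'"
  proof (cases "\<exists>x\<in>S2. x \<noteq> e2")
    case True
    then have "inj enc2" using enc2_inj by (meson injI)
    then have "map snd (cv u v) = map snd (cv u' v')" using H2 inj_map_eq_map by metis
    then show ?thesis unfolding snd_cv by (rule padded_eq)
  next
    case False
    then have t: "\<forall>x\<in>S2. x = e2" by blast
    have "\<psi>2 v = e2" "\<psi>2 v' = e2" using triv2[OF t bij_betw_apply[OF bij2 v(1)]] triv2[OF t bij_betw_apply[OF bij2 v(2)]] by simp_all
    then show ?thesis using inj_onD[OF bij_betw_imp_inj_on[OF bij2] _ v] by simp
  qed
  show ?thesis using uu vv by simp
qed

definition LL :: "('a \<times> 'b) list set" where "LL = {W u v | u v. u \<in> L1 \<and> v \<in> L2}"
definition psi :: "('a \<times> 'b) list \<Rightarrow> 'a \<times> 'b" where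
  "psi w = (SOME g. \<exists>u v. u \<in> L1 \<and> v \<in> L2 \<and> w = W u v \<and> g = (\<psi>1 u, \<psi>2 v))"

lemma psi_W: assumes "u \<in> L1" "v \<in> L2" shows "psi (W u v) = (\<psi>1 u, \<psi>2 v)"
proof -
  have ex: "\<exists>g. \<exists>u' v'. u' \<in> L1 \<and> v' \<in> L2 \<and> W u v = W u' v' \<and> g = (\<psi>1 u', \<psi>2 v')"
    using assms by blast
  obtain u' v' where h: "u' \<in> L1" "v' \<in> L2" "W u v = W u' v'" "psi (W u v) = (\<psi>1 u', \<psi>2 v')"
    using someI_ex[OF ex] unfolding psi_def by blast
  then have "u = u' \<and> v = v'" using W_inj assms by blast
  then show ?thesis using h by simp
qed

lemma bij_psi: "bij_betw psi LL (carrier PP)"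
proof (rule bij_betw_imageI)
  show "inj_on psi LL"
  proof (rule inj_onI)
    fix x y assume x: "x \<in> LL" and y: "y \<in> LL" and e: "psi x = psi y"
    obtain u v where uv: "u \<in> L1" "v \<in> L2" "x = W u v" using x unfolding LL_def by blast
    obtain u' v' where uv': "u' \<in> L1" "v' \<in> L2" "y = W u' v'" using y unfolding LL_def by blast
    have "\<psi>1 u = \<psi>1 u'" "\<psi>2 v = \<psi>2 v'" using e uv uv' psi_W by auto
    then have "u = u'" "v = v'" using bij1 bij2 uv uv' unfolding bij_betw_def by (metis inj_onD)+
    then show "x = y" using uv uv' by simp
  qed
  show "psi ` LL = carrier PP"
  proof (rule equalityI; rule subsetI)
    fix g assume "g \<in> psi ` LL"
    then obtain u v where uv: "u \<in> L1" "v \<in> L2" "g = psi (W u v)" unfolding LL_def by blast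
    then show "g \<in> carrier PP" using psi_W[OF uv(1,2)] bij_betw_apply[OF bij1 uv(1)] bij_betw_apply[OF bij2 uv(2)] by simp
  next
    fix g assume "g \<in> carrier PP"
    then obtain g1 g2 where g: "g = (g1, g2)" "g1 \<in> carrier G1" "g2 \<in> carrier G2" by auto
    define u where "u = inv_into L1 \<psi>1 g1"
    define v where "v = inv_into L2 \<psi>2 g2"
    have u: "u \<in> L1" "\<psi>1 u = g1" unfolding u_def using bij1 g(2)
      by (metis bij_betw_def inv_into_into f_inv_into_f)+
    have v: "v \<in> L2" "\<psi>2 v = g2" unfolding v_def using bij2 g(3)
      by (metis bij_betw_def inv_into_into f_inv_into_f)+
    have "W u v \<in> LL" unfolding LL_def using u v by blast
    then show "g \<in> psi ` LL" using psi_W u v g by force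
  qed
qed

lemma inv1: "g \<in> carrier G1 \<Longrightarrow> inv_into L1 \<psi>1 g \<in> L1 \<and> \<psi>1 (inv_into L1 \<psi>1 g) = g"
  using bij1 by (metis bij_betw_def inv_into_into f_inv_into_f)
lemma inv2: "g \<in> carrier G2 \<Longrightarrow> inv_into L2 \<psi>2 g \<in> L2 \<and> \<psi>2 (inv_into L2 \<psi>2 g) = g"
  using bij2 by (metis bij_betw_def inv_into_into f_inv_into_f)

lemma inv_psi:
  assumes "g1 \<in> carrier G1" "g2 \<in> carrier G2"
  shows "inv_into LL psi (g1, g2) = W (inv_into L1 \<psi>1 g1) (inv_into L2 \<psi>2 g2)"
proof (rule inv_into_f_eq)
  show "inj_on psi LL" using bij_psi bij_betw_def by blast
  show "W (inv_into L1 \<psi>1 g1) (inv_into L2 \<psi>2 g2) \<in> LL" unfolding LL_def using inv1 inv2 assms by blast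
  show "psi (W (inv_into L1 \<psi>1 g1) (inv_into L2 \<psi>2 g2)) = (g1, g2)" using psi_W inv1 inv2 assms by simp
qed

lemma LL_image: "LL = (\<lambda>t. concat (map enc t)) ` {cv u v | u v. u \<in> L1 \<and> v \<in> L2}"
  unfolding LL_def W_def by blast

lemma reg_LL: "regular_lang Sp LL"
  unfolding LL_image
proof (rule regular_block_image[OF regular_cv[OF reg1 reg2] Spf])
  fix \<sigma> assume "\<sigma> \<in> insert None (Some ` S1) \<times> insert None (Some ` S2)"
  then show "set (enc \<sigma>) \<subseteq> Sp \<and> length (enc \<sigma>) = 4" using enc_Sp by (cases \<sigma>) auto
qed simp

end


lemma nth_concat_blk:
  assumes "\<And>x. x \<in> set xs \<Longrightarrow> length (f x) = k" "i < length xs" "j < k"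
  shows "concat (map f xs) ! (k * i + j) = f (xs ! i) ! j"
  using assms(1,2)
proof (induction xs arbitrary: i)
  case Nil then show ?case by simp
next
  case (Cons x xs)
  have lx: "length (f x) = k" using Cons.prems by simp
  show ?case
  proof (cases i)
    case 0 then show ?thesis using lx assms(3) by (simp add: nth_append)
  next
    case (Suc i')
    have "concat (map f (x # xs)) ! (k * i + j) = concat (map f xs) ! (k * i' + j)"
      using lx Suc by (simp add: nth_append)
    also have "\<dots> = f (xs ! i') ! j" using Cons Suc by simp
    finally show ?thesis using Suc by simp
  qed
qed

definition onth :: "'x list \<Rightarrow> nat \<Rightarrow> 'x option" where
  "onth xs i = (if i < length xs then Some (xs ! i) else None)"

definition fo :: "('x option \<times> 'x option) option \<Rightarrow> 'x option" where
  "fo p = (case p of None \<Rightarrow> None | Some q \<Rightarrow> fst q)"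
definition so :: "('x option \<times> 'x option) option \<Rightarrow> 'x option" where
  "so p = (case p of None \<Rightarrow> None | Some q \<Rightarrow> snd q)"

lemma cv_onth: "i < max (length a) (length b) \<Longrightarrow> cv a b ! i = (onth a i, onth b i)"
  by (simp add: nth_cv onth_def)

lemma cv_onth2: "i < length (cv a b) \<Longrightarrow> cv a b ! i = (onth a i, onth b i)"
  by (simp add: cv_onth)

lemma fo_onth: "fo (onth (cv a b) i) = onth a i" "so (onth (cv a b) i) = onth b i"
  by (auto simp: fo_def so_def onth_def nth_cv)

context two_reps begin

definition FF :: "'a option \<Rightarrow> 'b option \<Rightarrow> nat \<Rightarrow> ('a \<times> 'b) option" where
  "FF x y j = (if x = None \<and> y = None then None else Some (enc (x, y) ! j))"

definition blk4 :: "('a option \<times> 'a option) option \<times> ('b option \<times> 'b option) option \<Rightarrow> (('a \<times> 'b) option \<times> ('a \<times> 'b) option) list" where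
  "blk4 pq = map (\<lambda>j. (FF (fo (fst pq)) (fo (snd pq)) j, FF (so (fst pq)) (so (snd pq)) j)) [0..<4]"

lemma length_blk4[simp]: "length (blk4 pq) = 4" by (simp add: blk4_def)

lemma onth_W:
  assumes j: "j < 4"
  shows "onth (W u v) (4 * i + j) = FF (onth u i) (onth v i) j"
proof (cases "i < max (length u) (length v)")
  case True
  then have "4 * i + j < length (W u v)" using j by (simp add: length_W)
  moreover have "W u v ! (4 * i + j) = enc (cv u v ! i) ! j"
    unfolding W_def by (rule nth_concat_blk) (use True j in auto)
  moreover have "\<not> (onth u i = None \<and> onth v i = None)" using True by (auto simp: onth_def)
  ultimately show ?thesis using True by (simp add: onth_def FF_def cv_onth)
next
  case False
  then have "\<not> 4 * i + j < length (W u v)" by (simp add: length_W)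
  moreover have "onth u i = None \<and> onth v i = None" using False by (auto simp: onth_def)
  ultimately show ?thesis by (simp add: onth_def FF_def)
qed

lemma conv_W:
  "conv (W u v) (W u' v') = concat (map blk4 (cv (cv u u') (cv v v')))"
proof (rule nth_equalityI)
  define N where "N = max (max (length u) (length u')) (max (length v) (length v'))"
  have lr: "length (concat (map blk4 (cv (cv u u') (cv v v')))) = 4 * N"
    unfolding N_def by (subst length_concat_blk[where k=4]) auto
  show "length (conv (W u v) (W u' v')) = length (concat (map blk4 (cv (cv u u') (cv v v'))))"
    unfolding lr conv_cv N_def by (simp add: length_W max_def)
  fix n assume "n < length (conv (W u v) (W u' v'))"
  then have n: "n < 4 * N" unfolding conv_cv N_def by (simp add: length_W max_def split: if_splits)
  define i where "i = n div 4"
  define j where "j = n mod 4"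
  have nij: "n = 4 * i + j" unfolding i_def j_def by simp
  have j: "j < 4" unfolding j_def by simp
  have i: "i < N" using n unfolding i_def by simp
  have "conv (W u v) (W u' v') ! n = (onth (W u v) n, onth (W u' v') n)"
    unfolding conv_cv using n by (intro cv_onth) (simp add: length_W N_def max_def split: if_splits)
  also have "\<dots> = (FF (onth u i) (onth v i) j, FF (onth u' i) (onth v' i) j)"
    unfolding nij using onth_W[OF j] by simp
  also have "\<dots> = blk4 (cv (cv u u') (cv v v') ! i) ! j"
  proof -
    have ci: "cv (cv u u') (cv v v') ! i = (onth (cv u u') i, onth (cv v v') i)"
      using i unfolding N_def by (intro cv_onth) simp
    show ?thesis unfolding ci blk4_def using j by (simp add: fo_onth)
  qed
  also have "\<dots> = concat (map blk4 (cv (cv u u') (cv v v'))) ! n"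
    unfolding nij by (rule nth_concat_blk[symmetric]) (use i j N_def in auto)
  finally show "conv (W u v) (W u' v') ! n = concat (map blk4 (cv (cv u u') (cv v v'))) ! n" .
qed

end


lemma cv_diag: "cv u u = concat (map (\<lambda>x. [(Some x, Some x)]) u)"
  by (induction u) auto

lemma C_regular:
  assumes gr: "group G" and car: "cayley_aut_rep G A L \<psi>" and fg: "fin_gen_set G A"
    and e: "e \<in> insert \<one>\<^bsub>G\<^esub> A"
  shows "regular_lang (insert None (Some ` sym_gens G A) \<times> insert None (Some ` sym_gens G A))
     {cv (inv_into L \<psi> g) (inv_into L \<psi> (g \<otimes>\<^bsub>G\<^esub> e)) | g. g \<in> carrier G}"
proof -
  have reg: "regular_lang (sym_gens G A) L" and bij: "bij_betw \<psi> L (carrier G)"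
    and rel: "\<forall>a\<in>A. fa_recognizable (sym_gens G A) {(inv_into L \<psi> g, inv_into L \<psi> (g \<otimes>\<^bsub>G\<^esub> a)) | g. g \<in> carrier G}"
    using car unfolding cayley_aut_rep_def by auto
  have finS: "finite (sym_gens G A)" using fg unfolding fin_gen_set_def sym_gens_def by auto
  show ?thesis
  proof (cases "e = \<one>\<^bsub>G\<^esub>")
    case True
    have eq: "{cv (inv_into L \<psi> g) (inv_into L \<psi> (g \<otimes>\<^bsub>G\<^esub> e)) | g. g \<in> carrier G} =
              (\<lambda>t. concat (map (\<lambda>x. [(Some x, Some x)]) t)) ` L"
    proof (rule equalityI; rule subsetI)
      fix c assume "c \<in> {cv (inv_into L \<psi> g) (inv_into L \<psi> (g \<otimes>\<^bsub>G\<^esub> e)) | g. g \<in> carrier G}"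
      then obtain g where g: "g \<in> carrier G" "c = cv (inv_into L \<psi> g) (inv_into L \<psi> (g \<otimes>\<^bsub>G\<^esub> e))" by blast
      have "g \<otimes>\<^bsub>G\<^esub> e = g" using True g(1) gr by (simp add: group.is_monoid monoid.r_one)
      then have "c = concat (map (\<lambda>x. [(Some x, Some x)]) (inv_into L \<psi> g))" using g(2) cv_diag by simp
      moreover have "inv_into L \<psi> g \<in> L" using bij g(1) by (metis bij_betw_def inv_into_into)
      ultimately show "c \<in> (\<lambda>t. concat (map (\<lambda>x. [(Some x, Some x)]) t)) ` L" by blast
    next
      fix c assume "c \<in> (\<lambda>t. concat (map (\<lambda>x. [(Some x, Some x)]) t)) ` L"
      then obtain u where u: "u \<in> L" "c = concat (map (\<lambda>x. [(Some x, Some x)]) u)" by blast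
      define g where "g = \<psi> u"
      have g: "g \<in> carrier G" unfolding g_def using bij u(1) by (rule bij_betw_apply)
      have iu: "inv_into L \<psi> g = u" unfolding g_def using bij u(1) by (simp add: bij_betw_def)
      have "g \<otimes>\<^bsub>G\<^esub> e = g" using True g gr by (simp add: group.is_monoid monoid.r_one)
      moreover have "c = cv u u" using u(2) cv_diag[of u] by metis
      ultimately have "c = cv (inv_into L \<psi> g) (inv_into L \<psi> (g \<otimes>\<^bsub>G\<^esub> e))" using iu by simp
      then show "c \<in> {cv (inv_into L \<psi> g) (inv_into L \<psi> (g \<otimes>\<^bsub>G\<^esub> e)) | g. g \<in> carrier G}" using g by blast
    qed
    show ?thesis unfolding eq
      by (rule regular_block_image[OF reg]) (use finS in auto)
  next
    case False
    then have eA: "e \<in> A" using e by blast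
    have "regular_lang (insert None (Some ` sym_gens G A) \<times> insert None (Some ` sym_gens G A))
      ((\<lambda>(u, v). conv u v) ` {(inv_into L \<psi> g, inv_into L \<psi> (g \<otimes>\<^bsub>G\<^esub> e)) | g. g \<in> carrier G})"
      using rel eA unfolding fa_recognizable_def by blast
    moreover have "(\<lambda>(u, v). conv u v) ` {(inv_into L \<psi> g, inv_into L \<psi> (g \<otimes>\<^bsub>G\<^esub> e)) | g. g \<in> carrier G}
       = {cv (inv_into L \<psi> g) (inv_into L \<psi> (g \<otimes>\<^bsub>G\<^esub> e)) | g. g \<in> carrier G}"
      by (auto simp: conv_cv)
    ultimately show ?thesis by simp
  qed
qed

context two_reps begin

lemma blk4_in:
  assumes "\<sigma> \<in> insert None (Some ` (insert None (Some ` S1) \<times> insert None (Some ` S1))) \<times>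
               insert None (Some ` (insert None (Some ` S2) \<times> insert None (Some ` S2)))"
  shows "set (blk4 \<sigma>) \<subseteq> insert None (Some ` Sp) \<times> insert None (Some ` Sp) \<and> length (blk4 \<sigma>) = 4"
proof -
  obtain p q where pq: "\<sigma> = (p, q)" by (cases \<sigma>)
  have f1: "fo p \<in> insert None (Some ` S1)" "so p \<in> insert None (Some ` S1)"
    using assms pq unfolding fo_def so_def by (auto split: option.splits)
  have f2: "fo q \<in> insert None (Some ` S2)" "so q \<in> insert None (Some ` S2)"
    using assms pq unfolding fo_def so_def by (auto split: option.splits)
  have FFin: "FF x y j \<in> insert None (Some ` Sp)"
    if "x \<in> insert None (Some ` S1)" "y \<in> insert None (Some ` S2)" "j < 4" for x y j
  proof -
    have "enc (x, y) ! j \<in> set (enc (x, y))" using that(3) by simp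
    then have "enc (x, y) ! j \<in> Sp" using enc_Sp[OF that(1,2)] by blast
    then show ?thesis unfolding FF_def by auto
  qed
  have "set (blk4 (p, q)) \<subseteq> insert None (Some ` Sp) \<times> insert None (Some ` Sp)"
  proof (rule subsetI)
    fix z assume "z \<in> set (blk4 (p, q))"
    then obtain j where j: "j < 4" "z = (FF (fo p) (fo q) j, FF (so p) (so q) j)"
      unfolding blk4_def by auto
    have "FF (fo p) (fo q) j \<in> insert None (Some ` Sp)" by (rule FFin[OF f1(1) f2(1) j(1)])
    moreover have "FF (so p) (so q) j \<in> insert None (Some ` Sp)" by (rule FFin[OF f1(2) f2(2) j(1)])
    ultimately show "z \<in> insert None (Some ` Sp) \<times> insert None (Some ` Sp)" unfolding j(2) by (rule SigmaI)
  qed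
  then show ?thesis unfolding pq by simp
qed

lemma rel_regular:
  assumes ea: "ea \<in> insert e1 A1" and eb: "eb \<in> insert e2 A2"
  shows "fa_recognizable Sp {(inv_into LL psi g, inv_into LL psi (g \<otimes>\<^bsub>PP\<^esub> (ea, eb))) | g. g \<in> carrier PP}"
proof -
  define C1 where "C1 = {cv (inv_into L1 \<psi>1 g) (inv_into L1 \<psi>1 (g \<otimes>\<^bsub>G1\<^esub> ea)) | g. g \<in> carrier G1}"
  define C2 where "C2 = {cv (inv_into L2 \<psi>2 g) (inv_into L2 \<psi>2 (g \<otimes>\<^bsub>G2\<^esub> eb)) | g. g \<in> carrier G2}"
  have r1: "regular_lang (insert None (Some ` S1) \<times> insert None (Some ` S1)) C1"
    unfolding C1_def by (rule C_regular[OF g1 car1 fg1 ea])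
  have r2: "regular_lang (insert None (Some ` S2) \<times> insert None (Some ` S2)) C2"
    unfolding C2_def by (rule C_regular[OF g2 car2 fg2 eb])
  define T where "T = {cv c d | c d. c \<in> C1 \<and> d \<in> C2}"
  have rT: "regular_lang (insert None (Some ` (insert None (Some ` S1) \<times> insert None (Some ` S1))) \<times>
               insert None (Some ` (insert None (Some ` S2) \<times> insert None (Some ` S2)))) T"
    unfolding T_def by (rule regular_cv[OF r1 r2])
  have finG: "finite (insert None (Some ` Sp) \<times> insert None (Some ` Sp))" using Spf by simp
  have rB: "regular_lang (insert None (Some ` Sp) \<times> insert None (Some ` Sp)) ((\<lambda>t. concat (map blk4 t)) ` T)"
    apply (rule regular_block_image[OF rT finG, where k=4]) apply simp by (rule blk4_in)
  have eac: "ea \<in> carrier G1"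
    using ea A1c monoid.one_closed[OF group.is_monoid[OF g1]] by (metis insertE subsetD)
  have ebc: "eb \<in> carrier G2"
    using eb A2c monoid.one_closed[OF group.is_monoid[OF g2]] by (metis insertE subsetD)
  have eq: "(\<lambda>(x, y). conv x y) ` {(inv_into LL psi g, inv_into LL psi (g \<otimes>\<^bsub>PP\<^esub> (ea, eb))) | g. g \<in> carrier PP}
      = (\<lambda>t. concat (map blk4 t)) ` T"
  proof (rule equalityI; rule subsetI)
    fix x assume "x \<in> (\<lambda>(x, y). conv x y) ` {(inv_into LL psi g, inv_into LL psi (g \<otimes>\<^bsub>PP\<^esub> (ea, eb))) | g. g \<in> carrier PP}"
    then obtain pr where pr: "pr \<in> {(inv_into LL psi g, inv_into LL psi (g \<otimes>\<^bsub>PP\<^esub> (ea, eb))) | g. g \<in> carrier PP}"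
      "x = (\<lambda>(x, y). conv x y) pr" by (rule imageE)
    from pr(1) obtain g where g0: "g \<in> carrier PP" "pr = (inv_into LL psi g, inv_into LL psi (g \<otimes>\<^bsub>PP\<^esub> (ea, eb)))"
      by blast
    have g: "g \<in> carrier PP" "x = conv (inv_into LL psi g) (inv_into LL psi (g \<otimes>\<^bsub>PP\<^esub> (ea, eb)))"
      using g0 pr(2) by simp_all
    obtain g1 g2 where gg: "g = (g1, g2)" "g1 \<in> carrier G1" "g2 \<in> carrier G2" using g(1) by auto
    have m1: "g1 \<otimes>\<^bsub>G1\<^esub> ea \<in> carrier G1" using gg eac g1 by (simp add: group.is_monoid monoid.m_closed)
    have m2: "g2 \<otimes>\<^bsub>G2\<^esub> eb \<in> carrier G2" using gg ebc g2 by (simp add: group.is_monoid monoid.m_closed)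
    have "x = conv (W (inv_into L1 \<psi>1 g1) (inv_into L2 \<psi>2 g2))
                   (W (inv_into L1 \<psi>1 (g1 \<otimes>\<^bsub>G1\<^esub> ea)) (inv_into L2 \<psi>2 (g2 \<otimes>\<^bsub>G2\<^esub> eb)))"
      using g(2) gg inv_psi m1 m2 by simp
    also have "\<dots> = concat (map blk4 (cv (cv (inv_into L1 \<psi>1 g1) (inv_into L1 \<psi>1 (g1 \<otimes>\<^bsub>G1\<^esub> ea)))
                    (cv (inv_into L2 \<psi>2 g2) (inv_into L2 \<psi>2 (g2 \<otimes>\<^bsub>G2\<^esub> eb)))))"
      by (rule conv_W)
    finally have xeq: "x = concat (map blk4 (cv (cv (inv_into L1 \<psi>1 g1) (inv_into L1 \<psi>1 (g1 \<otimes>\<^bsub>G1\<^esub> ea)))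
                    (cv (inv_into L2 \<psi>2 g2) (inv_into L2 \<psi>2 (g2 \<otimes>\<^bsub>G2\<^esub> eb)))))" .
    have mem: "cv (cv (inv_into L1 \<psi>1 g1) (inv_into L1 \<psi>1 (g1 \<otimes>\<^bsub>G1\<^esub> ea)))
                    (cv (inv_into L2 \<psi>2 g2) (inv_into L2 \<psi>2 (g2 \<otimes>\<^bsub>G2\<^esub> eb))) \<in> T"
    proof -
      have "cv (inv_into L1 \<psi>1 g1) (inv_into L1 \<psi>1 (g1 \<otimes>\<^bsub>G1\<^esub> ea)) \<in> C1" unfolding C1_def using gg(2) by blast
      moreover have "cv (inv_into L2 \<psi>2 g2) (inv_into L2 \<psi>2 (g2 \<otimes>\<^bsub>G2\<^esub> eb)) \<in> C2" unfolding C2_def using gg(3) by blast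
      ultimately show ?thesis unfolding T_def by blast
    qed
    from xeq mem show "x \<in> (\<lambda>t. concat (map blk4 t)) ` T" by (rule image_eqI)
  next
    fix x assume "x \<in> (\<lambda>t. concat (map blk4 t)) ` T"
    then obtain g1 g2 where gg: "g1 \<in> carrier G1" "g2 \<in> carrier G2"
      and x: "x = concat (map blk4 (cv (cv (inv_into L1 \<psi>1 g1) (inv_into L1 \<psi>1 (g1 \<otimes>\<^bsub>G1\<^esub> ea)))
                    (cv (inv_into L2 \<psi>2 g2) (inv_into L2 \<psi>2 (g2 \<otimes>\<^bsub>G2\<^esub> eb)))))"
      unfolding T_def C1_def C2_def by blast
    have m1: "g1 \<otimes>\<^bsub>G1\<^esub> ea \<in> carrier G1" using gg eac g1 by (simp add: group.is_monoid monoid.m_closed)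
    have m2: "g2 \<otimes>\<^bsub>G2\<^esub> eb \<in> carrier G2" using gg ebc g2 by (simp add: group.is_monoid monoid.m_closed)
    have "x = conv (W (inv_into L1 \<psi>1 g1) (inv_into L2 \<psi>2 g2))
                   (W (inv_into L1 \<psi>1 (g1 \<otimes>\<^bsub>G1\<^esub> ea)) (inv_into L2 \<psi>2 (g2 \<otimes>\<^bsub>G2\<^esub> eb)))"
      unfolding x by (rule conv_W[symmetric])
    also have "\<dots> = conv (inv_into LL psi (g1, g2)) (inv_into LL psi ((g1, g2) \<otimes>\<^bsub>PP\<^esub> (ea, eb)))"
      using gg inv_psi m1 m2 by simp
    finally have xx0: "x = conv (inv_into LL psi (g1, g2)) (inv_into LL psi ((g1, g2) \<otimes>\<^bsub>PP\<^esub> (ea, eb)))" .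
    have xx: "x = (\<lambda>(x, y). conv x y) (inv_into LL psi (g1, g2), inv_into LL psi ((g1, g2) \<otimes>\<^bsub>PP\<^esub> (ea, eb)))"
      using xx0 by (simp only: prod.case)
    have "(inv_into LL psi (g1, g2), inv_into LL psi ((g1, g2) \<otimes>\<^bsub>PP\<^esub> (ea, eb))) \<in>
        {(inv_into LL psi g, inv_into LL psi (g \<otimes>\<^bsub>PP\<^esub> (ea, eb))) | g. g \<in> carrier PP}"
    proof -
      have "(g1, g2) \<in> carrier PP" using gg by simp
      then show ?thesis by blast
    qed
    with xx show "x \<in> (\<lambda>(x, y). conv x y) ` {(inv_into LL psi g, inv_into LL psi (g \<otimes>\<^bsub>PP\<^esub> (ea, eb))) | g. g \<in> carrier PP}"
      by (rule image_eqI)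
  qed
  show ?thesis unfolding fa_recognizable_def eq by (rule rB)
qed

end


context two_reps begin

lemma fg_PP: "fin_gen_set PP Ap"
  unfolding fin_gen_set_def
proof (intro conjI)
  show "finite Ap" by (rule Apf)
  show "Ap \<subseteq> carrier PP" by (rule Apc)
  show "generate PP Ap = carrier PP"
  proof (rule equalityI)
    show "generate PP Ap \<subseteq> carrier PP" by (rule group.generate_incl[OF gP Apc])
    show "carrier PP \<subseteq> generate PP Ap"
    proof (rule subsetI)
      fix g assume "g \<in> carrier PP"
      then obtain g1 g2 where gg: "g = (g1, g2)" "g1 \<in> carrier G1" "g2 \<in> carrier G2" by auto
      obtain w1 where w1: "w1 \<in> lists S1" "eval_word G1 w1 = g1"
        using group.generate_word[OF g1 A1c] gen1 gg(2) by blast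
      obtain w2 where w2: "w2 \<in> lists S2" "eval_word G2 w2 = g2"
        using group.generate_word[OF g2 A2c] gen2 gg(3) by blast
      define w where "w = map (\<lambda>x. (x, e2)) w1 @ map (\<lambda>y. (e1, y)) w2"
      have wS: "w \<in> lists Sp" unfolding w_def using w1(1) w2(1) Sp_fst Sp_snd by auto
      have c1: "set (map (\<lambda>x. (x, e2)) w1) \<subseteq> carrier PP" using w1(1) Sp_fst Spc by auto
      have c2: "set (map (\<lambda>y. (e1, y)) w2) \<subseteq> carrier PP" using w2(1) Sp_snd Spc by auto
      have s1c: "set w1 \<subseteq> carrier G1" using w1(1) S1c by auto
      have s2c: "set w2 \<subseteq> carrier G2" using w2(1) S2c by auto
      have "eval_word PP w = (g1, e2) \<otimes>\<^bsub>PP\<^esub> (e1, g2)"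
        unfolding w_def group.eval_word_append[OF gP c1 c2]
        using eval_word_map_fst[OF g1 g2 s1c] eval_word_map_snd[OF g1 g2 s2c] w1(2) w2(2) by simp
      also have "\<dots> = g" using gg by (simp add: group.is_monoid[OF g1] group.is_monoid[OF g2])
      finally show "g \<in> generate PP Ap" using group.word_generate[OF gP Apc wS] by simp
    qed
  qed
qed

lemma car_PP: "cayley_aut_rep PP Ap LL psi"
  unfolding cayley_aut_rep_def
proof (intro conjI ballI)
  show "regular_lang Sp LL" by (rule reg_LL)
  show "bij_betw psi LL (carrier PP)" by (rule bij_psi)
  fix a assume "a \<in> Ap"
  then consider x where "x \<in> A1" "a = (x, e2)" | y where "y \<in> A2" "a = (e1, y)" | "a = (e1, e2)"
    unfolding Ap_def by blast
  then show "fa_recognizable Sp {(inv_into LL psi g, inv_into LL psi (g \<otimes>\<^bsub>PP\<^esub> a)) | g. g \<in> carrier PP}"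
  proof cases
    case 1 then show ?thesis using rel_regular[of x e2] by simp
  next
    case 2 then show ?thesis using rel_regular[of e1 y] by simp
  next
    case 3 then show ?thesis using rel_regular[of e1 e2] by simp
  qed
qed

lemma word_length_prod:
  assumes x: "x \<in> carrier G1" and y: "y \<in> carrier G2"
  shows "word_length PP Ap (x, y) \<le> word_length G1 A1 x + word_length G2 A2 y"
proof -
  obtain w1 where w1: "w1 \<in> lists S1" "length w1 = word_length G1 A1 x" "eval_word G1 w1 = x"
    using group.word_length_ex[OF g1 fg1 x] by blast
  obtain w2 where w2: "w2 \<in> lists S2" "length w2 = word_length G2 A2 y" "eval_word G2 w2 = y"
    using group.word_length_ex[OF g2 fg2 y] by blast
  define w where "w = map (\<lambda>x. (x, e2)) w1 @ map (\<lambda>y. (e1, y)) w2"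
  have wS: "w \<in> lists Sp" unfolding w_def using w1(1) w2(1) Sp_fst Sp_snd by auto
  have c1: "set (map (\<lambda>x. (x, e2)) w1) \<subseteq> carrier PP" using w1(1) Sp_fst Spc by auto
  have c2: "set (map (\<lambda>y. (e1, y)) w2) \<subseteq> carrier PP" using w2(1) Sp_snd Spc by auto
  have s1c: "set w1 \<subseteq> carrier G1" using w1(1) S1c by auto
  have s2c: "set w2 \<subseteq> carrier G2" using w2(1) S2c by auto
  have "eval_word PP w = (x, e2) \<otimes>\<^bsub>PP\<^esub> (e1, y)"
    unfolding w_def group.eval_word_append[OF gP c1 c2]
    using eval_word_map_fst[OF g1 g2 s1c] eval_word_map_snd[OF g1 g2 s2c] w1(3) w2(3) by simp
  also have "\<dots> = (x, y)" using x y by (simp add: group.is_monoid[OF g1] group.is_monoid[OF g2])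
  finally have "word_length PP Ap (x, y) \<le> length w" using group.word_length_le[OF gP wS] by simp
  then show ?thesis unfolding w_def using w1(2) w2(2) by simp
qed

lemma dist_W:
  assumes u: "u \<in> L1" and v: "v \<in> L2"
  shows "word_dist PP Ap (eval_word PP (W u v)) (psi (W u v)) \<le>
         word_dist G1 A1 (eval_word G1 u) (\<psi>1 u) + word_dist G2 A2 (eval_word G2 v) (\<psi>2 v)"
proof -
  have uS: "u \<in> lists S1" using u L1S by blast
  have vS: "v \<in> lists S2" using v L2S by blast
  have a: "eval_word G1 u \<in> carrier G1" using uS S1c by (intro group.eval_word_closed[OF g1]) auto
  have b: "eval_word G2 v \<in> carrier G2" using vS S2c by (intro group.eval_word_closed[OF g2]) auto
  have pu: "\<psi>1 u \<in> carrier G1" using bij_betw_apply[OF bij1 u] .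
  have pv: "\<psi>2 v \<in> carrier G2" using bij_betw_apply[OF bij2 v] .
  have "inv\<^bsub>PP\<^esub> (eval_word G1 u, eval_word G2 v) \<otimes>\<^bsub>PP\<^esub> (\<psi>1 u, \<psi>2 v) =
        (inv\<^bsub>G1\<^esub> eval_word G1 u \<otimes>\<^bsub>G1\<^esub> \<psi>1 u, inv\<^bsub>G2\<^esub> eval_word G2 v \<otimes>\<^bsub>G2\<^esub> \<psi>2 v)"
    using inv_DirProd[OF g1 g2 a b] by simp
  moreover have "inv\<^bsub>G1\<^esub> eval_word G1 u \<otimes>\<^bsub>G1\<^esub> \<psi>1 u \<in> carrier G1"
    using a pu by (simp add: group.inv_closed[OF g1] monoid.m_closed[OF group.is_monoid[OF g1]])
  moreover have "inv\<^bsub>G2\<^esub> eval_word G2 v \<otimes>\<^bsub>G2\<^esub> \<psi>2 v \<in> carrier G2"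
    using b pv by (simp add: group.inv_closed[OF g2] monoid.m_closed[OF group.is_monoid[OF g2]])
  ultimately show ?thesis unfolding word_dist_def eval_W[OF uS vS] psi_W[OF u v]
    using word_length_prod by simp
qed

lemma caut_bound:
  "caut_fun PP Ap LL psi n \<le> caut_fun G1 A1 L1 \<psi>1 n + caut_fun G2 A2 L2 \<psi>2 n"
proof -
  define D1 where "D1 = {real (word_dist G1 A1 (eval_word G1 w) (\<psi>1 w)) | w. w \<in> L1 \<and> length w \<le> n}"
  define D2 where "D2 = {real (word_dist G2 A2 (eval_word G2 w) (\<psi>2 w)) | w. w \<in> L2 \<and> length w \<le> n}"
  define DP where "DP = {real (word_dist PP Ap (eval_word PP w) (psi w)) | w. w \<in> LL \<and> length w \<le> n}"
  have S1f: "finite S1" using A1f unfolding sym_gens_def by simp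
  have S2f: "finite S2" using A2f unfolding sym_gens_def by simp
  have f1: "finite (insert 0 D1)" unfolding D1_def using finite_bounded_words[OF S1f L1S] by simp
  have f2: "finite (insert 0 D2)" unfolding D2_def using finite_bounded_words[OF S2f L2S] by simp
  have fP: "finite (insert 0 DP)" unfolding DP_def using finite_bounded_words[OF Spf regular_sub[OF reg_LL]] by simp
  have c1: "caut_fun G1 A1 L1 \<psi>1 n = Max (insert 0 D1)" unfolding caut_fun_def D1_def by simp
  have c2: "caut_fun G2 A2 L2 \<psi>2 n = Max (insert 0 D2)" unfolding caut_fun_def D2_def by simp
  have cP: "caut_fun PP Ap LL psi n = Max (insert 0 DP)" unfolding caut_fun_def DP_def by simp
  have n1: "0 \<le> Max (insert 0 D1)" using f1 by (simp add: Max_ge)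
  have n2: "0 \<le> Max (insert 0 D2)" using f2 by (simp add: Max_ge)
  have "Max (insert 0 DP) \<le> Max (insert 0 D1) + Max (insert 0 D2)"
  proof (rule Max.boundedI[OF fP])
    show "insert 0 DP \<noteq> {}" by simp
    fix d assume "d \<in> insert 0 DP"
    then show "d \<le> Max (insert 0 D1) + Max (insert 0 D2)"
    proof
      assume "d = 0" then show ?thesis using n1 n2 by simp
    next
      assume "d \<in> DP"
      then obtain w where w: "w \<in> LL" "length w \<le> n" "d = real (word_dist PP Ap (eval_word PP w) (psi w))"
        unfolding DP_def by blast
      then obtain u v where uv: "u \<in> L1" "v \<in> L2" "w = W u v" unfolding LL_def by blast
      have lu: "length u \<le> n" "length v \<le> n" using w(2) uv(3) length_W by auto
      have d1: "real (word_dist G1 A1 (eval_word G1 u) (\<psi>1 u)) \<le> Max (insert 0 D1)"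
        using f1 uv(1) lu(1) unfolding D1_def by (intro Max_ge) auto
      have d2: "real (word_dist G2 A2 (eval_word G2 v) (\<psi>2 v)) \<le> Max (insert 0 D2)"
        using f2 uv(2) lu(2) unfolding D2_def by (intro Max_ge) auto
      have "d \<le> real (word_dist G1 A1 (eval_word G1 u) (\<psi>1 u)) + real (word_dist G2 A2 (eval_word G2 v) (\<psi>2 v))"
        using dist_W[OF uv(1,2)] w(3) uv(3) by simp
      then show ?thesis using d1 d2 by simp
    qed
  qed
  then show ?thesis using c1 c2 cP by simp
qed

end


theorem mainTheorem5:
  fixes f :: "nat \<Rightarrow> real"
    and G1 :: "('a, 'm) monoid_scheme" and G2 :: "('b, 'n) monoid_scheme"
  assumes "in_frakF f"
    and "group G1" and "group G2"
    and "in_Bf f G1" and "in_Bf f G2"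
  shows "in_Bf f (G1 \<times>\<times> G2)"
proof -
  obtain A1 L1 \<psi>1 where h1: "fin_gen_set G1 A1" "cayley_aut_rep G1 A1 L1 \<psi>1" "preceq (caut_fun G1 A1 L1 \<psi>1) f"
    using assms(4) unfolding in_Bf_def by blast
  obtain A2 L2 \<psi>2 where h2: "fin_gen_set G2 A2" "cayley_aut_rep G2 A2 L2 \<psi>2" "preceq (caut_fun G2 A2 L2 \<psi>2) f"
    using assms(5) unfolding in_Bf_def by blast
  interpret T: two_reps G1 G2 A1 L1 \<psi>1 A2 L2 \<psi>2
    unfolding two_reps_def using assms(2,3) h1(1,2) h2(1,2) by blast
  obtain Q where mono: "\<And>m n. Q \<le> m \<Longrightarrow> m \<le> n \<Longrightarrow> f m \<le> f n" and nn: "\<And>n. Q \<le> n \<Longrightarrow> 0 \<le> f n"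
    using assms(1) unfolding in_frakF_def by blast
  obtain N1 K1 M1 where p1: "0 < K1" "0 < M1" "\<And>n. N1 \<le> n \<Longrightarrow> caut_fun G1 A1 L1 \<psi>1 n \<le> real K1 * f (M1 * n)"
    using h1(3) unfolding preceq_def by blast
  obtain N2 K2 M2 where p2: "0 < K2" "0 < M2" "\<And>n. N2 \<le> n \<Longrightarrow> caut_fun G2 A2 L2 \<psi>2 n \<le> real K2 * f (M2 * n)"
    using h2(3) unfolding preceq_def by blast
  have "preceq (caut_fun (G1 \<times>\<times> G2) T.Ap T.LL T.psi) f"
    unfolding preceq_def
  proof (intro exI conjI allI impI)
    show "0 < K1 + K2" using p1 by simp
    show "0 < M1 * M2" using p1 p2 by simp
    fix n assume n: "max (max N1 N2) Q \<le> n"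
    have Qn: "Q \<le> n" using n by simp
    have "n \<le> M1 * n" using p1(2) by simp
    then have q1: "Q \<le> M1 * n" using Qn by (rule order.trans[rotated])
    have "n \<le> M2 * n" using p2(2) by simp
    then have q2: "Q \<le> M2 * n" using Qn by (rule order.trans[rotated])
    have le1: "M1 * n \<le> M1 * M2 * n" using p2(2) by simp
    have le2: "M2 * n \<le> M1 * M2 * n" using p1(2) by simp
    have f1: "f (M1 * n) \<le> f (M1 * M2 * n)" by (rule mono[OF q1 le1])
    have f2: "f (M2 * n) \<le> f (M1 * M2 * n)" by (rule mono[OF q2 le2])
    have "caut_fun (G1 \<times>\<times> G2) T.Ap T.LL T.psi n \<le> caut_fun G1 A1 L1 \<psi>1 n + caut_fun G2 A2 L2 \<psi>2 n"
      by (rule T.caut_bound)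
    also have "\<dots> \<le> real K1 * f (M1 * n) + real K2 * f (M2 * n)"
      using p1(3) p2(3) n by (intro add_mono) auto
    also have "\<dots> \<le> real K1 * f (M1 * M2 * n) + real K2 * f (M1 * M2 * n)"
      using f1 f2 by (intro add_mono mult_left_mono) auto
    also have "\<dots> = real (K1 + K2) * f (M1 * M2 * n)" by (simp add: algebra_simps)
    finally show "caut_fun (G1 \<times>\<times> G2) T.Ap T.LL T.psi n \<le> real (K1 + K2) * f (M1 * M2 * n)" .
  qed
  then show ?thesis unfolding in_Bf_def using T.fg_PP T.car_PP by blast
qed


end
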